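(* Let $n\geq3$, $(R,\Lambda)$ a form ring, $C'\subseteq\mathrm{center}(R)$ a subring, $C$ the subring of $R$ of all finite sums of elements $c\bar c$ and $-c\bar c$ with $c\in C'$, and assume $R$ is a Noetherian $C$-module. Let $(I,\Gamma)$ be a form ideal of $(R,\Lambda)$ and $m$ a maximal ideal of $C$. Then there is $s_0\in S_m$ such that (1) if $x\in s_0R$ and $tx\in I$ for some $t\in S_m$, then $x\in I$; (2) if $x\in s_0R$ and $tx\in\Gamma$ for some $t\in S_m$, then $x\in\Gamma$. Moreover, $\phi_m$ is injective on $\psi(U_{2n}((R,\Lambda),(s_0R,s_0\Lambda)))$.
   Context: Rings are associative with $1\neq0$; $r\mapsto\bar r$ is an involution on $R$, $\lambda\in\mathrm{center}(R)$ with $\lambda\bar\lambda=1$. A form parameter is an additive subgroup $\Lambda$ with $\{r-\lambda\bar r\}\subseteq\Lambda\subseteq\{r:r=-\lambda\bar r\}$ and $r\Lambda\bar r\subseteq\Lambda$ for all $r$. A form ideal $(I,\Gamma)$: $I$ an ideal with $\bar I=I$, $\Gamma$ an additive subgroup with $\{\xi-\lambda\bar\xi:\xi\in I\}+\langle\zeta\alpha\bar\zeta:\zeta\in I,\alpha\in\Lambda\rangle\subseteq\Gamma\subseteq I\cap\Lambda$ and $\alpha\Gamma\bar\alpha\subseteq\Gamma$ for all $\alpha\in R$. Indices $\Omega=\{1,\dots,n,-n,\dots,-1\}$; for columns $u,v$: $\mathbbm{f}(u,v)=\sum_{i=1}^n\bar u_iv_{-i}$, $\mathbbm{h}(u,v)=\sum_{i=1}^n(\bar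 u_iv_{-i}+\lambda\bar u_{-i}v_i)$. $U_{2n}(R,\Lambda)$ = all $\sigma\in GL_{2n}(R)$ with $\mathbbm{h}(\sigma u,\sigma v)=\mathbbm{h}(u,v)$ and $\mathbbm{f}(\sigma u,\sigma u)-\mathbbm{f}(u,u)\in\Lambda$ for all $u,v$. For an involution invariant ideal $J$ and additive subgroup $\Delta\subseteq J\cap\Lambda$ (e.g. $(I,\Gamma)$ or $(s_0R,s_0\Lambda)$), $U_{2n}((R,\Lambda),(J,\Delta))$ = all $\sigma\in U_{2n}(R,\Lambda)$ with $\sigma\equiv e\pmod J$ and $\mathbbm{f}(\sigma u,\sigma u)-\mathbbm{f}(u,u)\in\Delta$ for all $u$. Localization: $C$ is central and fixed by the involution. $S_m=C\setminus m$, $R_m=S_m^{-1}R$ (involution $\overline{r/s}=\bar r/s$), $\Lambda_m=S_m^{-1}\Lambda$, $I_m=S_m^{-1}I$, $\Gamma_m=S_m^{-1}\Gamma$; $F_m:U_{2n}(R,\Lambda)\to U_{2n}(R_m,\Lambda_m)$ applies the localization map entrywise; $\psi:U_{2n}(R,\Lambda)\to U_{2n}(R,\Lambda)/U_{2n}((R,\Lambda),(I,\Gamma))$ is the canonical map; $\phi_m:U_{2n}(R,\Lambda)/U_{2n}((R,\Lambda),(I,\Gamma))\to U_{2n}(R_m,\Lambda_m)/U_{2n}((R_m,\Lambda_m),(I_m,\Gamma_m))$ is induced by $F_m$. *)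

theory Defs
  imports "HOL-Algebra.Algebra"
begin

definition ring_center :: "('a, 'b) ring_scheme \<Rightarrow> 'a set" where
  "ring_center R = {c \<in> carrier R. \<forall>r \<in> carrier R. c \<otimes>\<^bsub>R\<^esub> r = r \<otimes>\<^bsub>R\<^esub> c}"

definition is_involution :: "('a, 'b) ring_scheme \<Rightarrow> ('a \<Rightarrow> 'a) \<Rightarrow> bool" where
  "is_involution R J \<longleftrightarrow>
     (\<forall>x \<in> carrier R. J x \<in> carrier R) \<and>
     (\<forall>x \<in> carrier R. \<forall>y \<in> carrier R. J (x \<oplus>\<^bsub>R\<^esub> y) = J x \<oplus>\<^bsub>R\<^esub> J y) \<and>
     (\<forall>x \<in> carrier R. \<forall>y \<in> carrier R. J (x \<otimes>\<^bsub>R\<^esub> y) = J y \<otimes>\<^bsub>R\<^esub> J x) \<and>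
     (\<forall>x \<in> carrier R. J (J x) = x)"

definition form_parameter :: "('a, 'b) ring_scheme \<Rightarrow> ('a \<Rightarrow> 'a) \<Rightarrow> 'a \<Rightarrow> 'a set \<Rightarrow> bool" where
  "form_parameter R J l Lam \<longleftrightarrow>
     additive_subgroup Lam R \<and>
     {r \<ominus>\<^bsub>R\<^esub> l \<otimes>\<^bsub>R\<^esub> J r | r. r \<in> carrier R} \<subseteq> Lam \<and>
     Lam \<subseteq> {r \<in> carrier R. r = \<ominus>\<^bsub>R\<^esub> (l \<otimes>\<^bsub>R\<^esub> J r)} \<and>
     (\<forall>r \<in> carrier R. \<forall>a \<in> Lam. r \<otimes>\<^bsub>R\<^esub> a \<otimes>\<^bsub>R\<^esub> J r \<in> Lam)"

definition form_ring :: "('a, 'b) ring_scheme \<Rightarrow> ('a \<Rightarrow> 'a) \<Rightarrow> 'a \<Rightarrow> 'a set \<Rightarrow> bool" where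
  "form_ring R J l Lam \<longleftrightarrow>
     ring R \<and> \<one>\<^bsub>R\<^esub> \<noteq> \<zero>\<^bsub>R\<^esub> \<and> is_involution R J \<and>
     l \<in> ring_center R \<and> l \<otimes>\<^bsub>R\<^esub> J l = \<one>\<^bsub>R\<^esub> \<and>
     form_parameter R J l Lam"

text \<open>Since \<open>\<Gamma>\<close> is an additive subgroup, containing the sum
  of the set of all \<open>\<xi> - l \<xi>bar\<close> and the subgroup generated by all \<open>\<zeta>\<alpha>\<zeta>bar\<close> means
  containing all these elements.\<close>
definition form_ideal ::
  "('a, 'b) ring_scheme \<Rightarrow> ('a \<Rightarrow> 'a) \<Rightarrow> 'a \<Rightarrow> 'a set \<Rightarrow> 'a set \<Rightarrow> 'a set \<Rightarrow> bool" where
  "form_ideal R J l Lam I Gam \<longleftrightarrow>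
     ideal I R \<and> J ` I = I \<and>
     additive_subgroup Gam R \<and>
     {\<xi> \<ominus>\<^bsub>R\<^esub> l \<otimes>\<^bsub>R\<^esub> J \<xi> | \<xi>. \<xi> \<in> I} \<subseteq> Gam \<and>
     {\<zeta> \<otimes>\<^bsub>R\<^esub> \<alpha> \<otimes>\<^bsub>R\<^esub> J \<zeta> | \<zeta> \<alpha>. \<zeta> \<in> I \<and> \<alpha> \<in> Lam} \<subseteq> Gam \<and>
     Gam \<subseteq> I \<inter> Lam \<and>
     (\<forall>\<alpha> \<in> carrier R. \<forall>g \<in> Gam. \<alpha> \<otimes>\<^bsub>R\<^esub> g \<otimes>\<^bsub>R\<^esub> J \<alpha> \<in> Gam)"

inductive_set norm_sums :: "('a, 'b) ring_scheme \<Rightarrow> ('a \<Rightarrow> 'a) \<Rightarrow> 'a set \<Rightarrow> 'a set"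
  for R J C' where
  zero: "\<zero>\<^bsub>R\<^esub> \<in> norm_sums R J C'"
| pos: "c \<in> C' \<Longrightarrow> x \<in> norm_sums R J C' \<Longrightarrow> (c \<otimes>\<^bsub>R\<^esub> J c) \<oplus>\<^bsub>R\<^esub> x \<in> norm_sums R J C'"
| neg: "c \<in> C' \<Longrightarrow> x \<in> norm_sums R J C' \<Longrightarrow> (\<ominus>\<^bsub>R\<^esub> (c \<otimes>\<^bsub>R\<^esub> J c)) \<oplus>\<^bsub>R\<^esub> x \<in> norm_sums R J C'"

definition noetherian_module :: "('a, 'b) ring_scheme \<Rightarrow> 'a set \<Rightarrow> bool" where
  "noetherian_module R C \<longleftrightarrow>
     (\<forall>M. additive_subgroup M R \<and> (\<forall>c \<in> C. \<forall>x \<in> M. c \<otimes>\<^bsub>R\<^esub> x \<in> M) \<longrightarrow>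
        (\<exists>F. finite F \<and> F \<subseteq> M \<and>
             M = {finsum R (\<lambda>f. a f \<otimes>\<^bsub>R\<^esub> f) F | a. a \<in> F \<rightarrow> C}))"

text \<open>Index set \<open>\<Omega> = {1..n} \<union> {-n..-1}\<close>; matrices are functions \<open>int \<Rightarrow> int \<Rightarrow> 'a\<close>
  that are zero outside \<open>\<Omega> \<times> \<Omega>\<close>; column vectors are functions \<open>int \<Rightarrow> 'a\<close>.\<close>
definition Omega :: "nat \<Rightarrow> int set" where
  "Omega n = {1..int n} \<union> {- int n..-1}"

definition mat_carrier :: "('a, 'b) ring_scheme \<Rightarrow> nat \<Rightarrow> (int \<Rightarrow> int \<Rightarrow> 'a) set" where
  "mat_carrier R n = {\<sigma>. (\<forall>i \<in> Omega n. \<forall>j \<in> Omega n. \<sigma> i j \<in> carrier R) \<and>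
                         (\<forall>i j. i \<notin> Omega n \<or> j \<notin> Omega n \<longrightarrow> \<sigma> i j = \<zero>\<^bsub>R\<^esub>)}"

definition mat_mult :: "('a, 'b) ring_scheme \<Rightarrow> nat \<Rightarrow> (int \<Rightarrow> int \<Rightarrow> 'a) \<Rightarrow> (int \<Rightarrow> int \<Rightarrow> 'a) \<Rightarrow> (int \<Rightarrow> int \<Rightarrow> 'a)" where
  "mat_mult R n \<sigma> \<tau> = (\<lambda>i j. if i \<in> Omega n \<and> j \<in> Omega n
      then finsum R (\<lambda>k. \<sigma> i k \<otimes>\<^bsub>R\<^esub> \<tau> k j) (Omega n) else \<zero>\<^bsub>R\<^esub>)"

definition mat_one :: "('a, 'b) ring_scheme \<Rightarrow> nat \<Rightarrow> (int \<Rightarrow> int \<Rightarrow> 'a)" where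
  "mat_one R n = (\<lambda>i j. if i \<in> Omega n \<and> j \<in> Omega n \<and> i = j then \<one>\<^bsub>R\<^esub> else \<zero>\<^bsub>R\<^esub>)"

definition GL :: "('a, 'b) ring_scheme \<Rightarrow> nat \<Rightarrow> (int \<Rightarrow> int \<Rightarrow> 'a) set" where
  "GL R n = {\<sigma> \<in> mat_carrier R n. \<exists>\<tau> \<in> mat_carrier R n.
               mat_mult R n \<sigma> \<tau> = mat_one R n \<and> mat_mult R n \<tau> \<sigma> = mat_one R n}"

definition vec_carrier :: "('a, 'b) ring_scheme \<Rightarrow> nat \<Rightarrow> (int \<Rightarrow> 'a) set" where
  "vec_carrier R n = {u. \<forall>i \<in> Omega n. u i \<in> carrier R}"

definition mat_vec :: "('a, 'b) ring_scheme \<Rightarrow> nat \<Rightarrow> (int \<Rightarrow> int \<Rightarrow> 'a) \<Rightarrow> (int \<Rightarrow> 'a) \<Rightarrow> (int \<Rightarrow> 'a)" where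
  "mat_vec R n \<sigma> u = (\<lambda>i. finsum R (\<lambda>k. \<sigma> i k \<otimes>\<^bsub>R\<^esub> u k) (Omega n))"

definition form_f :: "('a, 'b) ring_scheme \<Rightarrow> ('a \<Rightarrow> 'a) \<Rightarrow> nat \<Rightarrow> (int \<Rightarrow> 'a) \<Rightarrow> (int \<Rightarrow> 'a) \<Rightarrow> 'a" where
  "form_f R J n u v = finsum R (\<lambda>i. J (u i) \<otimes>\<^bsub>R\<^esub> v (-i)) {1..int n}"

definition form_h :: "('a, 'b) ring_scheme \<Rightarrow> ('a \<Rightarrow> 'a) \<Rightarrow> 'a \<Rightarrow> nat \<Rightarrow> (int \<Rightarrow> 'a) \<Rightarrow> (int \<Rightarrow> 'a) \<Rightarrow> 'a" where
  "form_h R J l n u v = finsum R (\<lambda>i. J (u i) \<otimes>\<^bsub>R\<^esub> v (-i) \<oplus>\<^bsub>R\<^esub> l \<otimes>\<^bsub>R\<^esub> J (u (-i)) \<otimes>\<^bsub>R\<^esub> v i) {1..int n}"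

definition U2n :: "('a, 'b) ring_scheme \<Rightarrow> ('a \<Rightarrow> 'a) \<Rightarrow> 'a \<Rightarrow> 'a set \<Rightarrow> nat \<Rightarrow> (int \<Rightarrow> int \<Rightarrow> 'a) set" where
  "U2n R J l Lam n = {\<sigma> \<in> GL R n. \<forall>u \<in> vec_carrier R n. \<forall>v \<in> vec_carrier R n.
      form_h R J l n (mat_vec R n \<sigma> u) (mat_vec R n \<sigma> v) = form_h R J l n u v \<and>
      form_f R J n (mat_vec R n \<sigma> u) (mat_vec R n \<sigma> u) \<ominus>\<^bsub>R\<^esub> form_f R J n u u \<in> Lam}"

definition U2n_rel :: "('a, 'b) ring_scheme \<Rightarrow> ('a \<Rightarrow> 'a) \<Rightarrow> 'a \<Rightarrow> 'a set \<Rightarrow> nat \<Rightarrow> 'a set \<Rightarrow> 'a set \<Rightarrow> (int \<Rightarrow> int \<Rightarrow> 'a) set" where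
  "U2n_rel R J l Lam n K Del = {\<sigma> \<in> U2n R J l Lam n.
      (\<forall>i \<in> Omega n. \<forall>j \<in> Omega n. \<sigma> i j \<ominus>\<^bsub>R\<^esub> mat_one R n i j \<in> K) \<and>
      (\<forall>u \<in> vec_carrier R n.
         form_f R J n (mat_vec R n \<sigma> u) (mat_vec R n \<sigma> u) \<ominus>\<^bsub>R\<^esub> form_f R J n u u \<in> Del)}"

definition U2n_group :: "('a, 'b) ring_scheme \<Rightarrow> ('a \<Rightarrow> 'a) \<Rightarrow> 'a \<Rightarrow> 'a set \<Rightarrow> nat \<Rightarrow> (int \<Rightarrow> int \<Rightarrow> 'a) monoid" where
  "U2n_group R J l Lam n = \<lparr>carrier = U2n R J l Lam n, monoid.mult = mat_mult R n, monoid.one = mat_one R n\<rparr>"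

definition loc_rel :: "('a, 'b) ring_scheme \<Rightarrow> 'a set \<Rightarrow> (('a \<times> 'a) \<times> ('a \<times> 'a)) set" where
  "loc_rel R S = {((r, s), (r', s')). r \<in> carrier R \<and> s \<in> S \<and> r' \<in> carrier R \<and> s' \<in> S \<and>
      (\<exists>u \<in> S. u \<otimes>\<^bsub>R\<^esub> (s' \<otimes>\<^bsub>R\<^esub> r \<ominus>\<^bsub>R\<^esub> s \<otimes>\<^bsub>R\<^esub> r') = \<zero>\<^bsub>R\<^esub>)}"

definition frac :: "('a, 'b) ring_scheme \<Rightarrow> 'a set \<Rightarrow> 'a \<Rightarrow> 'a \<Rightarrow> ('a \<times> 'a) set" where
  "frac R S r s = loc_rel R S `` {(r, s)}"

definition loc_mult :: "('a, 'b) ring_scheme \<Rightarrow> 'a set \<Rightarrow> ('a \<times> 'a) set \<Rightarrow> ('a \<times> 'a) set \<Rightarrow> ('a \<times> 'a) set" where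
  "loc_mult R S A B = Union ((\<lambda>(p, q). frac R S (fst p \<otimes>\<^bsub>R\<^esub> fst q) (snd p \<otimes>\<^bsub>R\<^esub> snd q)) ` (A \<times> B))"

definition loc_add :: "('a, 'b) ring_scheme \<Rightarrow> 'a set \<Rightarrow> ('a \<times> 'a) set \<Rightarrow> ('a \<times> 'a) set \<Rightarrow> ('a \<times> 'a) set" where
  "loc_add R S A B = Union ((\<lambda>(p, q). frac R S (fst p \<otimes>\<^bsub>R\<^esub> snd q \<oplus>\<^bsub>R\<^esub> fst q \<otimes>\<^bsub>R\<^esub> snd p) (snd p \<otimes>\<^bsub>R\<^esub> snd q)) ` (A \<times> B))"

definition loc_ring :: "('a, 'b) ring_scheme \<Rightarrow> 'a set \<Rightarrow> ('a \<times> 'a) set ring" where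
  "loc_ring R S = \<lparr>carrier = (carrier R \<times> S) // loc_rel R S,
     monoid.mult = loc_mult R S,
     monoid.one = frac R S \<one>\<^bsub>R\<^esub> \<one>\<^bsub>R\<^esub>,
     ring.zero = frac R S \<zero>\<^bsub>R\<^esub> \<one>\<^bsub>R\<^esub>,
     ring.add = loc_add R S\<rparr>"

definition loc_inv :: "('a, 'b) ring_scheme \<Rightarrow> 'a set \<Rightarrow> ('a \<Rightarrow> 'a) \<Rightarrow> ('a \<times> 'a) set \<Rightarrow> ('a \<times> 'a) set" where
  "loc_inv R S J A = Union ((\<lambda>p. frac R S (J (fst p)) (snd p)) ` A)"

definition loc_set :: "('a, 'b) ring_scheme \<Rightarrow> 'a set \<Rightarrow> 'a set \<Rightarrow> ('a \<times> 'a) set set" where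
  "loc_set R S A = {frac R S a s | a s. a \<in> A \<and> s \<in> S}"

definition loc_mat :: "('a, 'b) ring_scheme \<Rightarrow> 'a set \<Rightarrow> nat \<Rightarrow> (int \<Rightarrow> int \<Rightarrow> 'a) \<Rightarrow> (int \<Rightarrow> int \<Rightarrow> ('a \<times> 'a) set)" where
  "loc_mat R S n \<sigma> = (\<lambda>i j. if i \<in> Omega n \<and> j \<in> Omega n then frac R S (\<sigma> i j) \<one>\<^bsub>R\<^esub>
                              else frac R S \<zero>\<^bsub>R\<^esub> \<one>\<^bsub>R\<^esub>)"

definition psi_map :: "('a, 'b) ring_scheme \<Rightarrow> ('a \<Rightarrow> 'a) \<Rightarrow> 'a \<Rightarrow> 'a set \<Rightarrow> nat \<Rightarrow> 'a set \<Rightarrow> 'a set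
     \<Rightarrow> (int \<Rightarrow> int \<Rightarrow> 'a) \<Rightarrow> (int \<Rightarrow> int \<Rightarrow> 'a) set" where
  "psi_map R J l Lam n I Gam \<sigma> = U2n_rel R J l Lam n I Gam #>\<^bsub>U2n_group R J l Lam n\<^esub> \<sigma>"

text \<open>\<open>\<phi>_m\<close>: the map of quotients induced by \<open>F_m\<close>, sending the coset of \<open>\<sigma>\<close> to the coset
  of \<open>F_m(\<sigma>)\<close>, with respect to the localized data \<open>(R_m,\<Lambda>_m)\<close>, \<open>(I_m,\<Gamma>_m)\<close>.\<close>
definition phi_map :: "('a, 'b) ring_scheme \<Rightarrow> ('a \<Rightarrow> 'a) \<Rightarrow> 'a \<Rightarrow> 'a set \<Rightarrow> nat \<Rightarrow> 'a set \<Rightarrow> 'a set \<Rightarrow> 'a set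
     \<Rightarrow> (int \<Rightarrow> int \<Rightarrow> 'a) set \<Rightarrow> (int \<Rightarrow> int \<Rightarrow> ('a \<times> 'a) set) set" where
  "phi_map R J l Lam n I Gam S A =
     Union ((\<lambda>\<sigma>. U2n_rel (loc_ring R S) (loc_inv R S J) (frac R S l \<one>\<^bsub>R\<^esub>) (loc_set R S Lam) n
                  (loc_set R S I) (loc_set R S Gam)
              #>\<^bsub>U2n_group (loc_ring R S) (loc_inv R S J) (frac R S l \<one>\<^bsub>R\<^esub>) (loc_set R S Lam) n\<^esub>
                loc_mat R S n \<sigma>) ` A)"

end

theory Submission
  imports Defs
begin


locale cloc = ring R for R (structure) +
  fixes S :: "'a set"
  assumes S_sub: "S \<subseteq> carrier R"
    and S_cen: "\<And>s x. s \<in> S \<Longrightarrow> x \<in> carrier R \<Longrightarrow> s \<otimes> x = x \<otimes> s"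
    and one_S: "\<one> \<in> S"
    and S_mult: "\<And>s t. s \<in> S \<Longrightarrow> t \<in> S \<Longrightarrow> s \<otimes> t \<in> S"
begin

lemma S_car[simp]: "s \<in> S \<Longrightarrow> s \<in> carrier R" using S_sub by auto

lemma cen_comm: "c \<in> S \<Longrightarrow> x \<in> carrier R \<Longrightarrow> x \<otimes> c = c \<otimes> x"
  using S_cen[of c x] by simp
lemma cen_lcomm: "c \<in> S \<Longrightarrow> x \<in> carrier R \<Longrightarrow> y \<in> carrier R \<Longrightarrow> x \<otimes> (c \<otimes> y) = c \<otimes> (x \<otimes> y)"
  by (metis S_car S_cen m_assoc)

lemmas cen_simps = m_assoc cen_comm cen_lcomm

lemma r_diff: "u \<in> carrier R \<Longrightarrow> a \<in> carrier R \<Longrightarrow> b \<in> carrier R \<Longrightarrow> u \<otimes> (a \<ominus> b) = u \<otimes> a \<ominus> u \<otimes> b"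
  by (simp add: a_minus_def r_distr r_minus)

lemma rel_iff: "((x,s),(y,t)) \<in> loc_rel R S \<longleftrightarrow>
   x \<in> carrier R \<and> s \<in> S \<and> y \<in> carrier R \<and> t \<in> S \<and> (\<exists>u\<in>S. u \<otimes> t \<otimes> x = u \<otimes> s \<otimes> y)"
proof -
  have "u \<otimes> (t \<otimes> x \<ominus> s \<otimes> y) = \<zero> \<longleftrightarrow> u \<otimes> t \<otimes> x = u \<otimes> s \<otimes> y"
    if "x \<in> carrier R" "s \<in> S" "y \<in> carrier R" "t \<in> S" "u \<in> S" for u
    using that by (simp add: r_diff m_assoc)
  then show ?thesis unfolding loc_rel_def by auto
qed

lemma rel_equiv: "equiv (carrier R \<times> S) (loc_rel R S)"
proof (rule equivI)
  show "refl_on (carrier R \<times> S) (loc_rel R S)"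
    unfolding refl_on_def
    by (auto simp: rel_iff loc_rel_def intro!: bexI[of _ \<one>] one_S)
  show "sym (loc_rel R S)"
    unfolding sym_def by (auto simp: rel_iff) (metis)
  show "trans (loc_rel R S)"
  proof (rule transI)
    fix a b c assume xy: "(a, b) \<in> loc_rel R S" and yz: "(b, c) \<in> loc_rel R S"
    obtain x s where x: "a = (x,s)" by fastforce
    obtain y t where y: "b = (y,t)" by fastforce
    obtain z w where z: "c = (z,w)" by fastforce
    from xy yz obtain u v where a: "x \<in> carrier R" "s \<in> S" "y \<in> carrier R" "t \<in> S"
      "z \<in> carrier R" "w \<in> S" "u \<in> S" "v \<in> S"
      and e1: "u \<otimes> t \<otimes> x = u \<otimes> s \<otimes> y" and e2: "v \<otimes> w \<otimes> y = v \<otimes> t \<otimes> z"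
      unfolding x y z rel_iff by blast
    have "(u \<otimes> v \<otimes> t) \<otimes> w \<otimes> x = (v \<otimes> w) \<otimes> (u \<otimes> t \<otimes> x)"
      using a by (simp add: cen_simps)
    also have "\<dots> = (u \<otimes> s) \<otimes> (v \<otimes> w \<otimes> y)" using a e1 by (simp add: cen_simps)
    also have "\<dots> = (u \<otimes> s) \<otimes> (v \<otimes> t \<otimes> z)" using e2 by simp
    also have "\<dots> = (u \<otimes> v \<otimes> t) \<otimes> s \<otimes> z" using a by (simp add: cen_simps)
    finally show "(a, c) \<in> loc_rel R S" unfolding x z rel_iff using a
      by (intro conjI bexI[of _ "u \<otimes> v \<otimes> t"]) (auto intro: S_mult)
  qed
  show "loc_rel R S \<subseteq> (carrier R \<times> S) \<times> (carrier R \<times> S)"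
    unfolding loc_rel_def by auto
qed

lemma frac_eq_iff: "x \<in> carrier R \<Longrightarrow> s \<in> S \<Longrightarrow> y \<in> carrier R \<Longrightarrow> t \<in> S \<Longrightarrow>
  frac R S x s = frac R S y t \<longleftrightarrow> (\<exists>u\<in>S. u \<otimes> t \<otimes> x = u \<otimes> s \<otimes> y)"
  unfolding frac_def using equiv_class_eq_iff[OF rel_equiv, of "(x,s)" "(y,t)"]
  by (simp add: rel_iff)

lemma frac_eqI: "x \<in> carrier R \<Longrightarrow> s \<in> S \<Longrightarrow> y \<in> carrier R \<Longrightarrow> t \<in> S \<Longrightarrow>
  t \<otimes> x = s \<otimes> y \<Longrightarrow> frac R S x s = frac R S y t"
  by (subst frac_eq_iff) (auto intro!: bexI[of _ \<one>] one_S simp: m_assoc)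

lemma mem_frac: "p \<in> frac R S x s \<longleftrightarrow> ((x,s), p) \<in> loc_rel R S"
  unfolding frac_def by auto

lemma frac_self: "x \<in> carrier R \<Longrightarrow> s \<in> S \<Longrightarrow> (x,s) \<in> frac R S x s"
  using rel_equiv unfolding mem_frac equiv_def refl_on_def by auto

lemma loc_carrier: "carrier (loc_ring R S) = {frac R S x s | x s. x \<in> carrier R \<and> s \<in> S}"
  unfolding loc_ring_def quotient_def frac_def by auto

lemma frac_in[simp]: "x \<in> carrier R \<Longrightarrow> s \<in> S \<Longrightarrow> frac R S x s \<in> carrier (loc_ring R S)"
  unfolding loc_carrier by auto

lemma mem_frac_D: "(x1, s1) \<in> frac R S x s \<Longrightarrow> \<exists>u\<in>S. u \<otimes> s1 \<otimes> x = u \<otimes> s \<otimes> x1 \<and> x1 \<in> carrier R \<and> s1 \<in> S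
   \<and> x \<in> carrier R \<and> s \<in> S"
  unfolding mem_frac by (auto simp: rel_iff)

lemma Union_const_img: "a \<in> A \<Longrightarrow> (\<And>p. p \<in> A \<Longrightarrow> f p = c) \<Longrightarrow> \<Union>(f ` A) = c"
  by (metis (no_types, lifting) SUP_eq_const empty_iff)

lemma mult_frac: assumes a: "x \<in> carrier R" "s \<in> S" "y \<in> carrier R" "t \<in> S"
  shows "loc_mult R S (frac R S x s) (frac R S y t) = frac R S (x \<otimes> y) (s \<otimes> t)"
proof -
  have H: "frac R S (x1 \<otimes> y1) (s1 \<otimes> t1) = frac R S (x \<otimes> y) (s \<otimes> t)"
    if p: "(x1, s1) \<in> frac R S x s" and q: "(y1, t1) \<in> frac R S y t" for x1 s1 y1 t1
  proof -
    obtain u where u: "u \<in> S" "u \<otimes> s1 \<otimes> x = u \<otimes> s \<otimes> x1" and pc: "x1 \<in> carrier R" "s1 \<in> S"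
      using mem_frac_D[OF p] by blast
    obtain v where v: "v \<in> S" "v \<otimes> t1 \<otimes> y = v \<otimes> t \<otimes> y1" and qc: "y1 \<in> carrier R" "t1 \<in> S"
      using mem_frac_D[OF q] by blast
    have "(u \<otimes> v) \<otimes> (s \<otimes> t) \<otimes> (x1 \<otimes> y1) = (u \<otimes> s \<otimes> x1) \<otimes> (v \<otimes> t \<otimes> y1)"
      using a u(1) v(1) pc qc by (simp add: cen_simps)
    also have "\<dots> = (u \<otimes> s1 \<otimes> x) \<otimes> (v \<otimes> t1 \<otimes> y)" by (simp only: u(2) v(2))
    also have "\<dots> = (u \<otimes> v) \<otimes> (s1 \<otimes> t1) \<otimes> (x \<otimes> y)"
      using a u(1) v(1) pc qc by (simp add: cen_simps)
    finally have c: "(u \<otimes> v) \<otimes> (s \<otimes> t) \<otimes> (x1 \<otimes> y1) = (u \<otimes> v) \<otimes> (s1 \<otimes> t1) \<otimes> (x \<otimes> y)" .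
    have cs: "x1 \<otimes> y1 \<in> carrier R" "s1 \<otimes> t1 \<in> S" "x \<otimes> y \<in> carrier R" "s \<otimes> t \<in> S" "u \<otimes> v \<in> S"
      using a u v pc qc by (auto intro: S_mult)
    show ?thesis unfolding frac_eq_iff[OF cs(1-4)]
      by (rule bexI[where x="u \<otimes> v"]) (fact c, fact cs(5))
  qed
  moreover have "((x,s),(y,t)) \<in> frac R S x s \<times> frac R S y t" using a frac_self by auto
  ultimately show ?thesis unfolding loc_mult_def
  proof (intro Union_const_img)
    fix z assume "z \<in> frac R S x s \<times> frac R S y t"
    then obtain p q where pq: "z = (p,q)" "p \<in> frac R S x s" "q \<in> frac R S y t" by blast
    obtain x1 s1 where "p = (x1,s1)" by fastforce
    moreover obtain y1 t1 where "q = (y1,t1)" by fastforce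
    ultimately show "(case z of (p, q) \<Rightarrow> frac R S (fst p \<otimes> fst q) (snd p \<otimes> snd q)) = frac R S (x \<otimes> y) (s \<otimes> t)"
      using pq H by simp
  qed
qed

lemma add_frac: assumes a: "x \<in> carrier R" "s \<in> S" "y \<in> carrier R" "t \<in> S"
  shows "loc_add R S (frac R S x s) (frac R S y t) = frac R S (x \<otimes> t \<oplus> y \<otimes> s) (s \<otimes> t)"
proof -
  have H: "frac R S (x1 \<otimes> t1 \<oplus> y1 \<otimes> s1) (s1 \<otimes> t1) = frac R S (x \<otimes> t \<oplus> y \<otimes> s) (s \<otimes> t)"
    if p: "(x1, s1) \<in> frac R S x s" and q: "(y1, t1) \<in> frac R S y t" for x1 s1 y1 t1
  proof -
    obtain u where u: "u \<in> S" "u \<otimes> s1 \<otimes> x = u \<otimes> s \<otimes> x1" and pc: "x1 \<in> carrier R" "s1 \<in> S"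
      using mem_frac_D[OF p] by blast
    obtain v where v: "v \<in> S" "v \<otimes> t1 \<otimes> y = v \<otimes> t \<otimes> y1" and qc: "y1 \<in> carrier R" "t1 \<in> S"
      using mem_frac_D[OF q] by blast
    have "(u \<otimes> v) \<otimes> (s \<otimes> t) \<otimes> (x1 \<otimes> t1 \<oplus> y1 \<otimes> s1)
        = (v \<otimes> t \<otimes> t1) \<otimes> (u \<otimes> s \<otimes> x1) \<oplus> (u \<otimes> s \<otimes> s1) \<otimes> (v \<otimes> t \<otimes> y1)"
      using a u(1) v(1) pc qc by (simp add: cen_simps r_distr)
    also have "\<dots> = (v \<otimes> t \<otimes> t1) \<otimes> (u \<otimes> s1 \<otimes> x) \<oplus> (u \<otimes> s \<otimes> s1) \<otimes> (v \<otimes> t1 \<otimes> y)"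
      by (simp only: u(2) v(2))
    also have "\<dots> = (u \<otimes> v) \<otimes> (s1 \<otimes> t1) \<otimes> (x \<otimes> t \<oplus> y \<otimes> s)"
      using a u(1) v(1) pc qc by (simp add: cen_simps r_distr)
    finally have c: "(u \<otimes> v) \<otimes> (s \<otimes> t) \<otimes> (x1 \<otimes> t1 \<oplus> y1 \<otimes> s1) = (u \<otimes> v) \<otimes> (s1 \<otimes> t1) \<otimes> (x \<otimes> t \<oplus> y \<otimes> s)" .
    have cs: "x1 \<otimes> t1 \<oplus> y1 \<otimes> s1 \<in> carrier R" "s1 \<otimes> t1 \<in> S" "x \<otimes> t \<oplus> y \<otimes> s \<in> carrier R" "s \<otimes> t \<in> S" "u \<otimes> v \<in> S"
      using a u v pc qc by (auto intro: S_mult)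
    show ?thesis unfolding frac_eq_iff[OF cs(1-4)]
      by (rule bexI[where x="u \<otimes> v"]) (fact c, fact cs(5))
  qed
  moreover have "((x,s),(y,t)) \<in> frac R S x s \<times> frac R S y t" using a frac_self by auto
  ultimately show ?thesis unfolding loc_add_def
  proof (intro Union_const_img)
    fix z assume "z \<in> frac R S x s \<times> frac R S y t"
    then obtain p q where pq: "z = (p,q)" "p \<in> frac R S x s" "q \<in> frac R S y t" by blast
    obtain x1 s1 where "p = (x1,s1)" by fastforce
    moreover obtain y1 t1 where "q = (y1,t1)" by fastforce
    ultimately show "(case z of (p, q) \<Rightarrow> frac R S (fst p \<otimes> snd q \<oplus> fst q \<otimes> snd p) (snd p \<otimes> snd q)) = frac R S (x \<otimes> t \<oplus> y \<otimes> s) (s \<otimes> t)"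
      using pq H by simp
  qed
qed


lemma loc_simps[simp]:
  "monoid.mult (loc_ring R S) = loc_mult R S"
  "ring.add (loc_ring R S) = loc_add R S"
  "\<one>\<^bsub>loc_ring R S\<^esub> = frac R S \<one> \<one>"
  "\<zero>\<^bsub>loc_ring R S\<^esub> = frac R S \<zero> \<one>"
  by (simp_all add: loc_ring_def)

lemma loc_carrierE:
  assumes "Xa \<in> carrier (loc_ring R S)"
  obtains x s where "Xa = frac R S x s" "x \<in> carrier R" "s \<in> S"
  using assms unfolding loc_carrier by blast

lemma loc_ring: "ring (loc_ring R S)"
proof (rule ringI)
  show "abelian_group (loc_ring R S)"
  proof (rule abelian_groupI)
    fix Xa Ya assume "Xa \<in> carrier (loc_ring R S)" "Ya \<in> carrier (loc_ring R S)"
    then show "Xa \<oplus>\<^bsub>loc_ring R S\<^esub> Ya \<in> carrier (loc_ring R S)"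
      by (auto elim!: loc_carrierE simp: add_frac intro!: frac_in S_mult)
  next
    show "\<zero>\<^bsub>loc_ring R S\<^esub> \<in> carrier (loc_ring R S)" using one_S by simp
  next
    fix Xa Ya Za assume "Xa \<in> carrier (loc_ring R S)" "Ya \<in> carrier (loc_ring R S)" "Za \<in> carrier (loc_ring R S)"
    then obtain x s y t z w where e: "Xa = frac R S x s" "Ya = frac R S y t" "Za = frac R S z w"
      and c: "x \<in> carrier R" "s \<in> S" "y \<in> carrier R" "t \<in> S" "z \<in> carrier R" "w \<in> S"
      by (metis loc_carrierE)
    show "Xa \<oplus>\<^bsub>loc_ring R S\<^esub> Ya \<oplus>\<^bsub>loc_ring R S\<^esub> Za = Xa \<oplus>\<^bsub>loc_ring R S\<^esub> (Ya \<oplus>\<^bsub>loc_ring R S\<^esub> Za)"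
      unfolding e using c by (simp add: add_frac S_mult) (rule frac_eqI, auto intro!: S_mult simp: cen_simps r_distr l_distr a_ac)
  next
    fix Xa Ya assume "Xa \<in> carrier (loc_ring R S)" "Ya \<in> carrier (loc_ring R S)"
    then obtain x s y t where e: "Xa = frac R S x s" "Ya = frac R S y t"
      and c: "x \<in> carrier R" "s \<in> S" "y \<in> carrier R" "t \<in> S"
      by (metis loc_carrierE)
    show "Xa \<oplus>\<^bsub>loc_ring R S\<^esub> Ya = Ya \<oplus>\<^bsub>loc_ring R S\<^esub> Xa"
      unfolding e using c by (simp add: add_frac S_mult) (rule frac_eqI, auto intro!: S_mult simp: cen_simps r_distr l_distr a_ac)
  next
    fix Xa assume "Xa \<in> carrier (loc_ring R S)"
    then obtain x s where e: "Xa = frac R S x s" and c: "x \<in> carrier R" "s \<in> S"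
      by (metis loc_carrierE)
    show "\<zero>\<^bsub>loc_ring R S\<^esub> \<oplus>\<^bsub>loc_ring R S\<^esub> Xa = Xa"
      unfolding e using c one_S by (simp add: add_frac S_mult)
  next
    fix Xa assume "Xa \<in> carrier (loc_ring R S)"
    then obtain x s where e: "Xa = frac R S x s" and c: "x \<in> carrier R" "s \<in> S"
      by (metis loc_carrierE)
    have "frac R S (\<ominus> x) s \<oplus>\<^bsub>loc_ring R S\<^esub> Xa = \<zero>\<^bsub>loc_ring R S\<^esub>"
      unfolding e using c one_S by (simp add: add_frac S_mult) (rule frac_eqI, auto intro!: S_mult simp: l_minus l_neg)
    then show "\<exists>Ya\<in>carrier (loc_ring R S). Ya \<oplus>\<^bsub>loc_ring R S\<^esub> Xa = \<zero>\<^bsub>loc_ring R S\<^esub>"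
      using c by (intro bexI[of _ "frac R S (\<ominus> x) s"]) auto
  qed
next
  show "monoid (loc_ring R S)"
  proof (rule monoidI)
    fix Xa Ya assume "Xa \<in> carrier (loc_ring R S)" "Ya \<in> carrier (loc_ring R S)"
    then show "Xa \<otimes>\<^bsub>loc_ring R S\<^esub> Ya \<in> carrier (loc_ring R S)"
      by (auto elim!: loc_carrierE simp: mult_frac intro!: frac_in S_mult)
  next
    show "\<one>\<^bsub>loc_ring R S\<^esub> \<in> carrier (loc_ring R S)" using one_S by simp
  next
    fix Xa Ya Za assume "Xa \<in> carrier (loc_ring R S)" "Ya \<in> carrier (loc_ring R S)" "Za \<in> carrier (loc_ring R S)"
    then obtain x s y t z w where e: "Xa = frac R S x s" "Ya = frac R S y t" "Za = frac R S z w"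
      and c: "x \<in> carrier R" "s \<in> S" "y \<in> carrier R" "t \<in> S" "z \<in> carrier R" "w \<in> S"
      by (metis loc_carrierE)
    show "Xa \<otimes>\<^bsub>loc_ring R S\<^esub> Ya \<otimes>\<^bsub>loc_ring R S\<^esub> Za = Xa \<otimes>\<^bsub>loc_ring R S\<^esub> (Ya \<otimes>\<^bsub>loc_ring R S\<^esub> Za)"
      unfolding e using c by (simp add: mult_frac S_mult m_assoc)
  next
    fix Xa assume "Xa \<in> carrier (loc_ring R S)"
    then obtain x s where e: "Xa = frac R S x s" and c: "x \<in> carrier R" "s \<in> S"
      by (metis loc_carrierE)
    show "\<one>\<^bsub>loc_ring R S\<^esub> \<otimes>\<^bsub>loc_ring R S\<^esub> Xa = Xa"
      unfolding e using c one_S by (simp add: mult_frac)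
    show "Xa \<otimes>\<^bsub>loc_ring R S\<^esub> \<one>\<^bsub>loc_ring R S\<^esub> = Xa"
      unfolding e using c one_S by (simp add: mult_frac)
  qed
next
  fix Xa Ya Za assume "Xa \<in> carrier (loc_ring R S)" "Ya \<in> carrier (loc_ring R S)" "Za \<in> carrier (loc_ring R S)"
  then obtain x s y t z w where e: "Xa = frac R S x s" "Ya = frac R S y t" "Za = frac R S z w"
    and c: "x \<in> carrier R" "s \<in> S" "y \<in> carrier R" "t \<in> S" "z \<in> carrier R" "w \<in> S"
    by (metis loc_carrierE)
  show "(Xa \<oplus>\<^bsub>loc_ring R S\<^esub> Ya) \<otimes>\<^bsub>loc_ring R S\<^esub> Za = Xa \<otimes>\<^bsub>loc_ring R S\<^esub> Za \<oplus>\<^bsub>loc_ring R S\<^esub> Ya \<otimes>\<^bsub>loc_ring R S\<^esub> Za"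
    unfolding e using c by (simp add: mult_frac add_frac S_mult) (rule frac_eqI, auto intro!: S_mult simp: cen_simps r_distr l_distr a_ac)
  show "Za \<otimes>\<^bsub>loc_ring R S\<^esub> (Xa \<oplus>\<^bsub>loc_ring R S\<^esub> Ya) = Za \<otimes>\<^bsub>loc_ring R S\<^esub> Xa \<oplus>\<^bsub>loc_ring R S\<^esub> Za \<otimes>\<^bsub>loc_ring R S\<^esub> Ya"
    unfolding e using c by (simp add: mult_frac add_frac S_mult) (rule frac_eqI, auto intro!: S_mult simp: cen_simps r_distr l_distr a_ac)
qed

end


lemma Omega_finite[simp]: "finite (Omega n)" by (simp add: Omega_def)
lemma Omega_pos: "i \<in> {1..int n} \<Longrightarrow> i \<in> Omega n" by (auto simp: Omega_def)
lemma Omega_neg: "i \<in> {1..int n} \<Longrightarrow> - i \<in> Omega n" by (auto simp: Omega_def)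

context ring begin

lemma finsum_swap:
  assumes "finite A" "finite B" "\<And>i j. i \<in> A \<Longrightarrow> j \<in> B \<Longrightarrow> f i j \<in> carrier R"
  shows "(\<Oplus>i\<in>A. \<Oplus>j\<in>B. f i j) = (\<Oplus>j\<in>B. \<Oplus>i\<in>A. f i j)"
  using assms
proof (induction A rule: finite_induct)
  case empty then show ?case by (simp add: finsum_zero)
next
  case (insert a A)
  have "(\<Oplus>i\<in>insert a A. \<Oplus>j\<in>B. f i j) = (\<Oplus>j\<in>B. f a j) \<oplus> (\<Oplus>i\<in>A. \<Oplus>j\<in>B. f i j)"
    using insert by (intro finsum_insert) (auto intro!: finsum_closed)
  also have "\<dots> = (\<Oplus>j\<in>B. f a j) \<oplus> (\<Oplus>j\<in>B. \<Oplus>i\<in>A. f i j)" using insert by simp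
  also have "\<dots> = (\<Oplus>j\<in>B. f a j \<oplus> (\<Oplus>i\<in>A. f i j))"
    using insert by (intro finsum_addf[symmetric]) (auto intro!: finsum_closed)
  also have "\<dots> = (\<Oplus>j\<in>B. \<Oplus>i\<in>insert a A. f i j)"
    using insert by (intro finsum_cong') (auto simp: finsum_insert)
  finally show ?case .
qed

lemma finsum_rdistr_assoc: "a \<in> carrier R \<Longrightarrow> finite A \<Longrightarrow> f \<in> A \<rightarrow> carrier R \<Longrightarrow> g \<in> A \<rightarrow> carrier R \<Longrightarrow>
  a \<otimes> (\<Oplus>k\<in>A. f k \<otimes> g k) = (\<Oplus>k\<in>A. a \<otimes> f k \<otimes> g k)"
  by (subst finsum_rdistr) (auto intro!: finsum_cong' simp: m_assoc Pi_def)

lemma mat_carrierD: "sg \<in> mat_carrier R n \<Longrightarrow> i \<in> Omega n \<Longrightarrow> j \<in> Omega n \<Longrightarrow> sg i j \<in> carrier R"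
  "sg \<in> mat_carrier R n \<Longrightarrow> i \<notin> Omega n \<Longrightarrow> sg i j = \<zero>"
  "sg \<in> mat_carrier R n \<Longrightarrow> j \<notin> Omega n \<Longrightarrow> sg i j = \<zero>"
  by (auto simp: mat_carrier_def)

lemma mat_carrier_all: "sg \<in> mat_carrier R n \<Longrightarrow> sg i j \<in> carrier R"
  by (cases "i \<in> Omega n \<and> j \<in> Omega n") (auto simp: mat_carrier_def)

lemma mat_mult_closed: "mat_mult R n sg tg \<in> mat_carrier R n" if "sg \<in> mat_carrier R n" "tg \<in> mat_carrier R n"
  using that unfolding mat_mult_def mat_carrier_def
  by (auto intro!: finsum_closed)

lemma mat_one_closed: "mat_one R n \<in> mat_carrier R n"
  unfolding mat_one_def mat_carrier_def by auto

lemma mat_one_left: "sg \<in> mat_carrier R n \<Longrightarrow> mat_mult R n (mat_one R n) sg = sg"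
proof -
  assume s: "sg \<in> mat_carrier R n"
  have "mat_mult R n (mat_one R n) sg i j = sg i j" for i j
  proof (cases "i \<in> Omega n \<and> j \<in> Omega n")
    case True
    have "(\<Oplus>k\<in>Omega n. mat_one R n i k \<otimes> sg k j) = (\<Oplus>k\<in>Omega n. if i = k then sg k j else \<zero>)"
      using True s by (intro finsum_cong') (auto simp: mat_one_def mat_carrier_all)
    also have "\<dots> = sg i j" using True s by (intro finsum_singleton) (auto simp: mat_carrier_all)
    finally show ?thesis using True by (simp add: mat_mult_def)
  next
    case False then show ?thesis using s by (auto simp: mat_mult_def mat_carrier_def)
  qed
  then show ?thesis by auto
qed

lemma mat_one_right: "sg \<in> mat_carrier R n \<Longrightarrow> mat_mult R n sg (mat_one R n) = sg"
proof -
  assume s: "sg \<in> mat_carrier R n"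
  have "mat_mult R n sg (mat_one R n) i j = sg i j" for i j
  proof (cases "i \<in> Omega n \<and> j \<in> Omega n")
    case True
    have "(\<Oplus>k\<in>Omega n. sg i k \<otimes> mat_one R n k j) = (\<Oplus>k\<in>Omega n. if j = k then sg i k else \<zero>)"
      using True s by (intro finsum_cong') (auto simp: mat_one_def mat_carrier_all)
    also have "\<dots> = sg i j" using True s by (intro finsum_singleton) (auto simp: mat_carrier_all)
    finally show ?thesis using True by (simp add: mat_mult_def)
  next
    case False then show ?thesis using s by (auto simp: mat_mult_def mat_carrier_def)
  qed
  then show ?thesis by auto
qed

lemma mat_assoc:
  assumes a: "sg \<in> mat_carrier R n" "tg \<in> mat_carrier R n" "rg \<in> mat_carrier R n"
  shows "mat_mult R n (mat_mult R n sg tg) rg = mat_mult R n sg (mat_mult R n tg rg)"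
proof -
  have "mat_mult R n (mat_mult R n sg tg) rg i j = mat_mult R n sg (mat_mult R n tg rg) i j" for i j
  proof (cases "i \<in> Omega n \<and> j \<in> Omega n")
    case True
    have "(\<Oplus>k\<in>Omega n. mat_mult R n sg tg i k \<otimes> rg k j)
        = (\<Oplus>k\<in>Omega n. \<Oplus>l\<in>Omega n. sg i l \<otimes> tg l k \<otimes> rg k j)"
      using True a by (intro finsum_cong') (auto simp: mat_mult_def mat_carrier_all finsum_ldistr)
    also have "\<dots> = (\<Oplus>l\<in>Omega n. \<Oplus>k\<in>Omega n. sg i l \<otimes> tg l k \<otimes> rg k j)"
      using a by (intro finsum_swap) (auto simp: mat_carrier_all)
    also have "\<dots> = (\<Oplus>l\<in>Omega n. sg i l \<otimes> mat_mult R n tg rg l j)"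
      using True a unfolding mat_mult_def
      by (intro finsum_cong') (auto simp: mat_carrier_all finsum_rdistr_assoc intro!: finsum_closed)
    finally show ?thesis using True by (simp add: mat_mult_def)
  next
    case False then show ?thesis by (auto simp: mat_mult_def)
  qed
  then show ?thesis by auto
qed

lemma vec_carrierD: "u \<in> vec_carrier R n \<Longrightarrow> i \<in> Omega n \<Longrightarrow> u i \<in> carrier R"
  by (simp add: vec_carrier_def)

lemma mat_vec_closed: "sg \<in> mat_carrier R n \<Longrightarrow> u \<in> vec_carrier R n \<Longrightarrow> mat_vec R n sg u i \<in> carrier R"
  unfolding mat_vec_def by (auto intro!: finsum_closed simp: mat_carrier_all vec_carrierD)

lemma mat_vec_vec: "sg \<in> mat_carrier R n \<Longrightarrow> u \<in> vec_carrier R n \<Longrightarrow> mat_vec R n sg u \<in> vec_carrier R n"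
  using mat_vec_closed by (auto simp: vec_carrier_def)

lemma mat_vec_mult:
  assumes a: "sg \<in> mat_carrier R n" "tg \<in> mat_carrier R n" "u \<in> vec_carrier R n"
  shows "mat_vec R n (mat_mult R n sg tg) u = mat_vec R n sg (mat_vec R n tg u)"
proof -
  have "mat_vec R n (mat_mult R n sg tg) u i = mat_vec R n sg (mat_vec R n tg u) i" for i
  proof (cases "i \<in> Omega n")
    case True
    have "(\<Oplus>k\<in>Omega n. mat_mult R n sg tg i k \<otimes> u k)
        = (\<Oplus>k\<in>Omega n. \<Oplus>l\<in>Omega n. sg i l \<otimes> tg l k \<otimes> u k)"
      using True a by (intro finsum_cong') (auto simp: mat_mult_def mat_carrier_all finsum_ldistr vec_carrierD)
    also have "\<dots> = (\<Oplus>l\<in>Omega n. \<Oplus>k\<in>Omega n. sg i l \<otimes> tg l k \<otimes> u k)"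
      using a by (intro finsum_swap) (auto simp: mat_carrier_all vec_carrierD)
    also have "\<dots> = (\<Oplus>l\<in>Omega n. sg i l \<otimes> mat_vec R n tg u l)"
      using True a unfolding mat_vec_def
      by (intro finsum_cong') (auto simp: mat_carrier_all vec_carrierD finsum_rdistr_assoc intro!: finsum_closed)
    finally show ?thesis by (simp add: mat_vec_def)
  next
    case False
    have "(\<Oplus>k\<in>Omega n. mat_mult R n sg tg i k \<otimes> u k) = (\<Oplus>k\<in>Omega n. \<zero>)"
      using False a by (intro finsum_cong') (auto simp: mat_mult_def vec_carrierD)
    moreover have "(\<Oplus>k\<in>Omega n. sg i k \<otimes> mat_vec R n tg u k) = (\<Oplus>k\<in>Omega n. \<zero>)"
      using False a by (intro finsum_cong') (auto simp: mat_carrierD mat_vec_closed)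
    ultimately show ?thesis by (simp add: mat_vec_def)
  qed
  then show ?thesis by auto
qed

lemma mat_vec_one: "u \<in> vec_carrier R n \<Longrightarrow> i \<in> Omega n \<Longrightarrow> mat_vec R n (mat_one R n) u i = u i"
proof -
  assume u: "u \<in> vec_carrier R n" and i: "i \<in> Omega n"
  have "(\<Oplus>k\<in>Omega n. mat_one R n i k \<otimes> u k) = (\<Oplus>k\<in>Omega n. if i = k then u k else \<zero>)"
    using i u by (intro finsum_cong') (auto simp: mat_one_def vec_carrierD)
  also have "\<dots> = u i" using i u by (intro finsum_singleton) (auto simp: vec_carrierD)
  finally show ?thesis by (simp add: mat_vec_def)
qed

lemma form_f_cong: "(\<And>x. x \<in> carrier R \<Longrightarrow> J x \<in> carrier R) \<Longrightarrow> u' \<in> vec_carrier R n \<Longrightarrow> v' \<in> vec_carrier R n \<Longrightarrow>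
   (\<And>i. i \<in> Omega n \<Longrightarrow> u i = u' i) \<Longrightarrow> (\<And>i. i \<in> Omega n \<Longrightarrow> v i = v' i) \<Longrightarrow>
   form_f R J n u v = form_f R J n u' v'"
  unfolding form_f_def by (intro finsum_cong') (auto simp: Omega_pos Omega_neg vec_carrierD)

lemma form_h_cong: "(\<And>x. x \<in> carrier R \<Longrightarrow> J x \<in> carrier R) \<Longrightarrow> l \<in> carrier R \<Longrightarrow> u' \<in> vec_carrier R n \<Longrightarrow> v' \<in> vec_carrier R n \<Longrightarrow>
   (\<And>i. i \<in> Omega n \<Longrightarrow> u i = u' i) \<Longrightarrow> (\<And>i. i \<in> Omega n \<Longrightarrow> v i = v' i) \<Longrightarrow>
   form_h R J l n u v = form_h R J l n u' v'"
  unfolding form_h_def by (intro finsum_cong') (auto simp: Omega_pos Omega_neg vec_carrierD)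

lemma form_f_closed: "(\<And>x. x \<in> carrier R \<Longrightarrow> J x \<in> carrier R) \<Longrightarrow> u \<in> vec_carrier R n \<Longrightarrow> v \<in> vec_carrier R n \<Longrightarrow>
   form_f R J n u v \<in> carrier R"
  unfolding form_f_def by (intro finsum_closed) (auto simp: Omega_pos Omega_neg vec_carrierD)

end

definition mat_map :: "('a \<Rightarrow> 'c) \<Rightarrow> (int \<Rightarrow> int \<Rightarrow> 'a) \<Rightarrow> (int \<Rightarrow> int \<Rightarrow> 'c)" where
  "mat_map h sg = (\<lambda>i j. h (sg i j))"

context ring_hom_ring begin

lemma mat_map_carrier: "sg \<in> mat_carrier R n \<Longrightarrow> mat_map h sg \<in> mat_carrier S n"
  unfolding mat_map_def mat_carrier_def by auto

lemma mat_map_mult: assumes a: "sg \<in> mat_carrier R n" "tg \<in> mat_carrier R n"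
  shows "mat_mult S n (mat_map h sg) (mat_map h tg) = mat_map h (mat_mult R n sg tg)"
proof -
  have "mat_mult S n (mat_map h sg) (mat_map h tg) i j = mat_map h (mat_mult R n sg tg) i j" for i j
    using a by (auto simp: mat_mult_def mat_map_def R.mat_carrier_all comp_def Pi_def)
  then show ?thesis by auto
qed

lemma mat_map_one: "mat_map h (mat_one R n) = mat_one S n"
  unfolding mat_map_def mat_one_def by (intro ext) auto

lemma mat_map_vec: assumes a: "sg \<in> mat_carrier R n" "u \<in> vec_carrier R n"
  shows "mat_vec S n (mat_map h sg) (h \<circ> u) = h \<circ> mat_vec R n sg u"
proof -
  have "mat_vec S n (mat_map h sg) (h \<circ> u) i = h (mat_vec R n sg u i)" for i
    using a unfolding mat_vec_def mat_map_def
    by (subst hom_finsum) (auto simp: R.mat_carrier_all comp_def Pi_def R.vec_carrierD intro!: S.finsum_cong')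
  then show ?thesis by auto
qed

lemma map_vec_carrier: "u \<in> vec_carrier R n \<Longrightarrow> h \<circ> u \<in> vec_carrier S n"
  by (auto simp: vec_carrier_def)

lemma map_form_f: assumes J: "\<And>x. x \<in> carrier R \<Longrightarrow> J x \<in> carrier R"
  and JJ: "\<And>x. x \<in> carrier R \<Longrightarrow> h (J x) = J' (h x)"
  and a: "u \<in> vec_carrier R n" "v \<in> vec_carrier R n"
  shows "form_f S J' n (h \<circ> u) (h \<circ> v) = h (form_f R J n u v)"
  using a unfolding form_f_def
  by (subst hom_finsum) (auto simp: Pi_def R.vec_carrierD Omega_pos Omega_neg J JJ[symmetric] intro!: S.finsum_cong')

end


context ring begin

lemma additive_subgroupI':
  assumes "H \<subseteq> carrier R" "\<zero> \<in> H" "\<And>x y. x \<in> H \<Longrightarrow> y \<in> H \<Longrightarrow> x \<oplus> y \<in> H"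
    "\<And>x. x \<in> H \<Longrightarrow> \<ominus> x \<in> H"
  shows "additive_subgroup H R"
  using assms unfolding additive_subgroup_def subgroup_def by (auto simp: a_inv_def[symmetric])

lemma minus_self[simp]: "a \<in> carrier R \<Longrightarrow> a \<ominus> a = \<zero>"
  by (simp add: a_minus_def r_neg)

lemma minus_tele: "a \<in> carrier R \<Longrightarrow> b \<in> carrier R \<Longrightarrow> c \<in> carrier R \<Longrightarrow> a \<ominus> c = (a \<ominus> b) \<oplus> (b \<ominus> c)"
  by (simp add: a_minus_def a_assoc r_neg1)

lemma minus_swap: "a \<in> carrier R \<Longrightarrow> b \<in> carrier R \<Longrightarrow> a \<ominus> b = \<ominus> (b \<ominus> a)"
  by (simp add: a_minus_def minus_add minus_minus a_comm)

lemma minus_addadd: "a \<in> carrier R \<Longrightarrow> b \<in> carrier R \<Longrightarrow> c \<in> carrier R \<Longrightarrow> d \<in> carrier R \<Longrightarrow>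
  (a \<oplus> b) \<ominus> (c \<oplus> d) = (a \<ominus> c) \<oplus> (b \<ominus> d)"
  by (simp add: a_minus_def minus_add a_ac)

lemma l_diff: "u \<in> carrier R \<Longrightarrow> a \<in> carrier R \<Longrightarrow> b \<in> carrier R \<Longrightarrow> (a \<ominus> b) \<otimes> u = a \<otimes> u \<ominus> b \<otimes> u"
  by (simp add: a_minus_def l_distr l_minus)

lemma r_diff': "u \<in> carrier R \<Longrightarrow> a \<in> carrier R \<Longrightarrow> b \<in> carrier R \<Longrightarrow> u \<otimes> (a \<ominus> b) = u \<otimes> a \<ominus> u \<otimes> b"
  by (simp add: a_minus_def r_distr r_minus)

lemma modK_trans: "additive_subgroup K R \<Longrightarrow> a \<in> carrier R \<Longrightarrow> b \<in> carrier R \<Longrightarrow> c \<in> carrier R \<Longrightarrow>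
  a \<ominus> b \<in> K \<Longrightarrow> b \<ominus> c \<in> K \<Longrightarrow> a \<ominus> c \<in> K"
  by (simp add: minus_tele[of a b c] additive_subgroup.a_closed)

lemma modK_sym: "additive_subgroup K R \<Longrightarrow> a \<in> carrier R \<Longrightarrow> b \<in> carrier R \<Longrightarrow>
  a \<ominus> b \<in> K \<Longrightarrow> b \<ominus> a \<in> K"
  by (simp add: minus_swap[of b a] additive_subgroup.a_inv_closed)

lemma modK_finsum:
  assumes K: "additive_subgroup K R" and A: "finite A"
    and f: "\<And>k. k \<in> A \<Longrightarrow> f k \<in> carrier R" and g: "\<And>k. k \<in> A \<Longrightarrow> g k \<in> carrier R"
    and fg: "\<And>k. k \<in> A \<Longrightarrow> f k \<ominus> g k \<in> K"
  shows "finsum R f A \<ominus> finsum R g A \<in> K"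
  using A f g fg
proof (induction A rule: finite_induct)
  case empty then show ?case using K by (simp add: additive_subgroup.zero_closed)
next
  case (insert a A)
  then show ?case using K
    by (simp add: finsum_insert Pi_def minus_addadd finsum_closed additive_subgroup.a_closed)
qed

end

locale ugrp = ring R for R (structure) +
  fixes J :: "'a \<Rightarrow> 'a" and l :: 'a and Lam :: "'a set" and n :: nat
  assumes J_closed: "\<And>x. x \<in> carrier R \<Longrightarrow> J x \<in> carrier R"
    and l_closed: "l \<in> carrier R"
    and Lam_sub: "additive_subgroup Lam R"
begin

abbreviation "G \<equiv> U2n_group R J l Lam n"

lemma U2n_mat: "sg \<in> U2n R J l Lam n \<Longrightarrow> sg \<in> mat_carrier R n"
  by (simp add: U2n_def GL_def)

lemma ff_closed: "u \<in> vec_carrier R n \<Longrightarrow> form_f R J n u u \<in> carrier R"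
  using form_f_closed J_closed by blast

lemma one_U2n: "mat_one R n \<in> U2n R J l Lam n"
proof -
  have "mat_one R n \<in> GL R n"
    unfolding GL_def using mat_one_closed mat_one_left[OF mat_one_closed] by blast
  moreover have "form_h R J l n (mat_vec R n (mat_one R n) u) (mat_vec R n (mat_one R n) v) = form_h R J l n u v"
    if "u \<in> vec_carrier R n" "v \<in> vec_carrier R n" for u v
    using that by (intro form_h_cong J_closed l_closed) (auto simp: mat_vec_one)
  moreover have "form_f R J n (mat_vec R n (mat_one R n) u) (mat_vec R n (mat_one R n) u) \<ominus> form_f R J n u u \<in> Lam"
    if "u \<in> vec_carrier R n" for u
  proof -
    have "form_f R J n (mat_vec R n (mat_one R n) u) (mat_vec R n (mat_one R n) u) = form_f R J n u u"
      using that by (intro form_f_cong J_closed) (auto simp: mat_vec_one)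
    then show ?thesis using that ff_closed additive_subgroup.zero_closed[OF Lam_sub] by simp
  qed
  ultimately show ?thesis unfolding U2n_def by blast
qed

lemma GL_mult: "sg \<in> GL R n \<Longrightarrow> tg \<in> GL R n \<Longrightarrow> mat_mult R n sg tg \<in> GL R n"
proof -
  assume "sg \<in> GL R n" "tg \<in> GL R n"
  then obtain sg' tg' where s: "sg \<in> mat_carrier R n" "sg' \<in> mat_carrier R n"
    "mat_mult R n sg sg' = mat_one R n" "mat_mult R n sg' sg = mat_one R n"
    and t: "tg \<in> mat_carrier R n" "tg' \<in> mat_carrier R n"
    "mat_mult R n tg tg' = mat_one R n" "mat_mult R n tg' tg = mat_one R n"
    unfolding GL_def by blast
  have a1: "mat_mult R n tg (mat_mult R n tg' sg') = sg'"
    using s t by (simp add: mat_assoc[symmetric] mat_one_left)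
  have 1: "mat_mult R n (mat_mult R n sg tg) (mat_mult R n tg' sg') = mat_one R n"
    using s t a1 by (simp add: mat_assoc mat_mult_closed)
  have a2: "mat_mult R n sg' (mat_mult R n sg tg) = tg"
    using s t by (simp add: mat_assoc[symmetric] mat_one_left)
  have 2: "mat_mult R n (mat_mult R n tg' sg') (mat_mult R n sg tg) = mat_one R n"
    using s t a2 by (simp add: mat_assoc mat_mult_closed)
  show ?thesis unfolding GL_def using s t 1 2 by (auto intro!: mat_mult_closed)
qed

lemma mult_U2n: assumes s: "sg \<in> U2n R J l Lam n" and t: "tg \<in> U2n R J l Lam n"
  shows "mat_mult R n sg tg \<in> U2n R J l Lam n"
proof -
  have sm: "sg \<in> mat_carrier R n" and tm: "tg \<in> mat_carrier R n" using s t U2n_mat by auto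
  have "mat_mult R n sg tg \<in> GL R n" using s t GL_mult by (simp add: U2n_def)
  moreover have "form_h R J l n (mat_vec R n (mat_mult R n sg tg) u) (mat_vec R n (mat_mult R n sg tg) v) = form_h R J l n u v"
    if "u \<in> vec_carrier R n" "v \<in> vec_carrier R n" for u v
    using that s t sm tm by (simp add: mat_vec_mult U2n_def mat_vec_vec)
  moreover have "form_f R J n (mat_vec R n (mat_mult R n sg tg) u) (mat_vec R n (mat_mult R n sg tg) u) \<ominus> form_f R J n u u \<in> Lam"
    if u: "u \<in> vec_carrier R n" for u
  proof -
    let ?w = "mat_vec R n tg u"
    have w: "?w \<in> vec_carrier R n" using u tm mat_vec_vec by blast
    have "form_f R J n (mat_vec R n sg ?w) (mat_vec R n sg ?w) \<ominus> form_f R J n u u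
      = (form_f R J n (mat_vec R n sg ?w) (mat_vec R n sg ?w) \<ominus> form_f R J n ?w ?w) \<oplus>
        (form_f R J n ?w ?w \<ominus> form_f R J n u u)"
      using u w sm tm by (intro minus_tele ff_closed mat_vec_vec)
    also have "\<dots> \<in> Lam" using s t u w unfolding U2n_def
      by (intro additive_subgroup.a_closed[OF Lam_sub]) auto
    finally show ?thesis using u sm tm by (simp add: mat_vec_mult)
  qed
  ultimately show ?thesis unfolding U2n_def by blast
qed

lemma inv_U2n: assumes s: "sg \<in> U2n R J l Lam n"
  obtains tg where "tg \<in> U2n R J l Lam n" "mat_mult R n tg sg = mat_one R n" "mat_mult R n sg tg = mat_one R n"
proof -
  obtain tg where t: "tg \<in> mat_carrier R n" "mat_mult R n sg tg = mat_one R n" "mat_mult R n tg sg = mat_one R n"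
    using s unfolding U2n_def GL_def by blast
  have sm: "sg \<in> mat_carrier R n" using s U2n_mat by auto
  have bk: "mat_vec R n sg (mat_vec R n tg u) i = u i" if "u \<in> vec_carrier R n" "i \<in> Omega n" for u i
    using that t sm by (simp add: mat_vec_mult[symmetric] mat_vec_one)
  have "tg \<in> GL R n" unfolding GL_def using t sm by blast
  moreover have "form_h R J l n (mat_vec R n tg u) (mat_vec R n tg v) = form_h R J l n u v"
    if "u \<in> vec_carrier R n" "v \<in> vec_carrier R n" for u v
  proof -
    have "form_h R J l n (mat_vec R n tg u) (mat_vec R n tg v)
       = form_h R J l n (mat_vec R n sg (mat_vec R n tg u)) (mat_vec R n sg (mat_vec R n tg v))"
      using s that t(1) mat_vec_vec unfolding U2n_def by auto
    also have "\<dots> = form_h R J l n u v"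
      using that bk by (intro form_h_cong J_closed l_closed) auto
    finally show ?thesis .
  qed
  moreover have "form_f R J n (mat_vec R n tg u) (mat_vec R n tg u) \<ominus> form_f R J n u u \<in> Lam"
    if u: "u \<in> vec_carrier R n" for u
  proof -
    let ?w = "mat_vec R n tg u"
    have w: "?w \<in> vec_carrier R n" using u t mat_vec_vec by blast
    have e: "form_f R J n (mat_vec R n sg ?w) (mat_vec R n sg ?w) = form_f R J n u u"
      using u bk by (intro form_f_cong J_closed) auto
    have "form_f R J n (mat_vec R n sg ?w) (mat_vec R n sg ?w) \<ominus> form_f R J n ?w ?w \<in> Lam"
      using s w unfolding U2n_def by auto
    then have "\<ominus> (form_f R J n u u \<ominus> form_f R J n ?w ?w) \<in> Lam"
      using e by (simp add: additive_subgroup.a_inv_closed[OF Lam_sub])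
    then show ?thesis using u w ff_closed by (simp add: minus_swap[symmetric])
  qed
  ultimately have "tg \<in> U2n R J l Lam n" unfolding U2n_def by blast
  then show ?thesis using that t by blast
qed

lemma G_simps[simp]: "carrier G = U2n R J l Lam n" "monoid.mult G = mat_mult R n" "\<one>\<^bsub>G\<^esub> = mat_one R n"
  by (simp_all add: U2n_group_def)

lemma U2n_group: "group G"
proof (rule groupI)
  fix x y assume "x \<in> carrier G" "y \<in> carrier G"
  then show "x \<otimes>\<^bsub>G\<^esub> y \<in> carrier G" by (simp add: mult_U2n)
next
  show "\<one>\<^bsub>G\<^esub> \<in> carrier G" by (simp add: one_U2n)
next
  fix x y z assume "x \<in> carrier G" "y \<in> carrier G" "z \<in> carrier G"
  then show "x \<otimes>\<^bsub>G\<^esub> y \<otimes>\<^bsub>G\<^esub> z = x \<otimes>\<^bsub>G\<^esub> (y \<otimes>\<^bsub>G\<^esub> z)"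
    by (simp add: mat_assoc U2n_mat)
next
  fix x assume "x \<in> carrier G"
  then show "\<one>\<^bsub>G\<^esub> \<otimes>\<^bsub>G\<^esub> x = x" by (simp add: mat_one_left U2n_mat)
next
  fix x assume x: "x \<in> carrier G"
  then obtain tg where "tg \<in> U2n R J l Lam n" "mat_mult R n tg x = mat_one R n"
    using inv_U2n[of x] by auto
  then show "\<exists>y\<in>carrier G. y \<otimes>\<^bsub>G\<^esub> x = \<one>\<^bsub>G\<^esub>" by auto
qed

lemma G_inv: assumes "sg \<in> U2n R J l Lam n" "tg \<in> U2n R J l Lam n" "mat_mult R n tg sg = mat_one R n"
  shows "inv\<^bsub>G\<^esub> sg = tg"
  using group.inv_equality[OF U2n_group, of tg sg] assms by simp

lemma G_inv_props: assumes "sg \<in> U2n R J l Lam n"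
  shows "inv\<^bsub>G\<^esub> sg \<in> U2n R J l Lam n" "mat_mult R n (inv\<^bsub>G\<^esub> sg) sg = mat_one R n"
    "mat_mult R n sg (inv\<^bsub>G\<^esub> sg) = mat_one R n"
  using inv_U2n[OF assms] G_inv assms by metis+


lemma mult_entry: "i \<in> Omega n \<Longrightarrow> j \<in> Omega n \<Longrightarrow> mat_mult R n sg tg i j = (\<Oplus>k\<in>Omega n. sg i k \<otimes> tg k j)"
  by (simp add: mat_mult_def)

lemma one_entry_closed[simp]: "mat_one R n i j \<in> carrier R"
  by (simp add: mat_one_def)

end


context ugrp begin
lemma rel_subgroup:
  assumes K: "additive_subgroup K R" and Kl: "\<And>x a. x \<in> K \<Longrightarrow> a \<in> carrier R \<Longrightarrow> a \<otimes> x \<in> K"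
    and Kr: "\<And>x a. x \<in> K \<Longrightarrow> a \<in> carrier R \<Longrightarrow> x \<otimes> a \<in> K"
    and D: "additive_subgroup Del R"
  shows "subgroup (U2n_rel R J l Lam n K Del) G"
proof (rule subgroup.intro)
  show "U2n_rel R J l Lam n K Del \<subseteq> carrier G" by (auto simp: U2n_rel_def)
next
  show "\<one>\<^bsub>G\<^esub> \<in> U2n_rel R J l Lam n K Del"
  proof -
    have "form_f R J n (mat_vec R n (mat_one R n) u) (mat_vec R n (mat_one R n) u) \<ominus> form_f R J n u u \<in> Del"
      if "u \<in> vec_carrier R n" for u
    proof -
      have "form_f R J n (mat_vec R n (mat_one R n) u) (mat_vec R n (mat_one R n) u) = form_f R J n u u"
        using that by (intro form_f_cong J_closed) (auto simp: mat_vec_one)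
      then show ?thesis using that ff_closed additive_subgroup.zero_closed[OF D] by simp
    qed
    then show ?thesis using one_U2n additive_subgroup.zero_closed[OF K]
      by (auto simp: U2n_rel_def)
  qed
next
  fix sg tg assume s: "sg \<in> U2n_rel R J l Lam n K Del" and t: "tg \<in> U2n_rel R J l Lam n K Del"
  have sU: "sg \<in> U2n R J l Lam n" and tU: "tg \<in> U2n R J l Lam n" using s t by (auto simp: U2n_rel_def)
  have sm: "sg \<in> mat_carrier R n" and tm: "tg \<in> mat_carrier R n" using sU tU U2n_mat by auto
  have "mat_mult R n sg tg i j \<ominus> mat_one R n i j \<in> K" if ij: "i \<in> Omega n" "j \<in> Omega n" for i j
  proof -
    have "mat_mult R n sg tg i j \<ominus> mat_mult R n (mat_one R n) tg i j \<in> K"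
      unfolding mult_entry[OF ij]
    proof (rule modK_finsum[OF K])
      fix k assume k: "k \<in> Omega n"
      have "sg i k \<ominus> mat_one R n i k \<in> K" using s ij k by (auto simp: U2n_rel_def)
      then have "(sg i k \<ominus> mat_one R n i k) \<otimes> tg k j \<in> K" using Kr tm k ij by (simp add: mat_carrier_all)
      then show "sg i k \<otimes> tg k j \<ominus> mat_one R n i k \<otimes> tg k j \<in> K"
        using sm tm by (simp add: l_diff mat_carrier_all)
    qed (use sm tm in \<open>auto simp: mat_carrier_all\<close>)
    then have "mat_mult R n sg tg i j \<ominus> tg i j \<in> K" using tm by (simp add: mat_one_left)
    moreover have "tg i j \<ominus> mat_one R n i j \<in> K" using t ij by (auto simp: U2n_rel_def)
    ultimately show ?thesis
      by (rule modK_trans[OF K mat_carrier_all[OF mat_mult_closed[OF sm tm]] mat_carrier_all[OF tm] one_entry_closed])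
  qed
  moreover have "form_f R J n (mat_vec R n (mat_mult R n sg tg) u) (mat_vec R n (mat_mult R n sg tg) u) \<ominus> form_f R J n u u \<in> Del"
    if u: "u \<in> vec_carrier R n" for u
  proof -
    let ?w = "mat_vec R n tg u"
    have w: "?w \<in> vec_carrier R n" using u tm mat_vec_vec by blast
    have "form_f R J n (mat_vec R n sg ?w) (mat_vec R n sg ?w) \<ominus> form_f R J n u u
      = (form_f R J n (mat_vec R n sg ?w) (mat_vec R n sg ?w) \<ominus> form_f R J n ?w ?w) \<oplus>
        (form_f R J n ?w ?w \<ominus> form_f R J n u u)"
      using u w sm tm by (intro minus_tele ff_closed mat_vec_vec)
    also have "\<dots> \<in> Del" using s t u w unfolding U2n_rel_def
      by (intro additive_subgroup.a_closed[OF D]) auto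
    finally show ?thesis using u sm tm by (simp add: mat_vec_mult)
  qed
  ultimately show "sg \<otimes>\<^bsub>G\<^esub> tg \<in> U2n_rel R J l Lam n K Del"
    using sU tU mult_U2n by (simp add: U2n_rel_def)
next
  fix sg assume s: "sg \<in> U2n_rel R J l Lam n K Del"
  have sU: "sg \<in> U2n R J l Lam n" using s by (auto simp: U2n_rel_def)
  define tg where "tg = inv\<^bsub>G\<^esub> sg"
  have tU: "tg \<in> U2n R J l Lam n" and ts: "mat_mult R n tg sg = mat_one R n"
    and st: "mat_mult R n sg tg = mat_one R n"
    using G_inv_props[OF sU] unfolding tg_def by auto
  have sm: "sg \<in> mat_carrier R n" and tm: "tg \<in> mat_carrier R n" using sU tU U2n_mat by auto
  have "tg i j \<ominus> mat_one R n i j \<in> K" if ij: "i \<in> Omega n" "j \<in> Omega n" for i j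
  proof -
    have "mat_mult R n tg (mat_one R n) i j \<ominus> mat_mult R n tg sg i j \<in> K"
      unfolding mult_entry[OF ij]
    proof (rule modK_finsum[OF K])
      fix k assume k: "k \<in> Omega n"
      have "sg k j \<ominus> mat_one R n k j \<in> K" using s ij k by (auto simp: U2n_rel_def)
      then have "mat_one R n k j \<ominus> sg k j \<in> K" by (rule modK_sym[OF K mat_carrier_all[OF sm] one_entry_closed])
      then have "tg i k \<otimes> (mat_one R n k j \<ominus> sg k j) \<in> K" using Kl tm by (simp add: mat_carrier_all)
      then show "tg i k \<otimes> mat_one R n k j \<ominus> tg i k \<otimes> sg k j \<in> K"
        using sm tm by (simp add: r_diff' mat_carrier_all)
    qed (use sm tm in \<open>auto simp: mat_carrier_all\<close>)
    then show ?thesis using tm ts by (simp add: mat_one_right)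
  qed
  moreover have "form_f R J n (mat_vec R n tg u) (mat_vec R n tg u) \<ominus> form_f R J n u u \<in> Del"
    if u: "u \<in> vec_carrier R n" for u
  proof -
    let ?w = "mat_vec R n tg u"
    have w: "?w \<in> vec_carrier R n" using u tm mat_vec_vec by blast
    have bk: "mat_vec R n sg ?w i = u i" if "i \<in> Omega n" for i
      using that u st sm tm by (simp add: mat_vec_mult[symmetric] mat_vec_one)
    have e: "form_f R J n (mat_vec R n sg ?w) (mat_vec R n sg ?w) = form_f R J n u u"
      using u bk by (intro form_f_cong J_closed) auto
    have "form_f R J n (mat_vec R n sg ?w) (mat_vec R n sg ?w) \<ominus> form_f R J n ?w ?w \<in> Del"
      using s w unfolding U2n_rel_def by auto
    then have "\<ominus> (form_f R J n u u \<ominus> form_f R J n ?w ?w) \<in> Del"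
      using e by (simp add: additive_subgroup.a_inv_closed[OF D])
    then show ?thesis using u w ff_closed by (simp add: minus_swap[symmetric])
  qed
  ultimately show "inv\<^bsub>G\<^esub> sg \<in> U2n_rel R J l Lam n K Del"
    using tU unfolding tg_def[symmetric] by (simp add: U2n_rel_def)
qed

end


context cloc begin

lemma frac_hom: "(\<lambda>x. frac R S x \<one>) \<in> ring_hom R (loc_ring R S)"
  by (rule ring_hom_memI) (auto simp: mult_frac add_frac one_S)

lemma frac_hom_ring: "ring_hom_ring R (loc_ring R S) (\<lambda>x. frac R S x \<one>)"
  by (rule ring_hom_ringI2[OF ring_axioms loc_ring frac_hom])

lemma frac_mult1: "x \<in> carrier R \<Longrightarrow> y \<in> carrier R \<Longrightarrow>
  frac R S x \<one> \<otimes>\<^bsub>loc_ring R S\<^esub> frac R S y \<one> = frac R S (x \<otimes> y) \<one>"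
  by (simp add: mult_frac one_S)

lemma frac_minus1: "x \<in> carrier R \<Longrightarrow> y \<in> carrier R \<Longrightarrow>
  frac R S x \<one> \<ominus>\<^bsub>loc_ring R S\<^esub> frac R S y \<one> = frac R S (x \<ominus> y) \<one>"
proof -
  assume a: "x \<in> carrier R" "y \<in> carrier R"
  interpret FH: ring_hom_ring R "loc_ring R S" "\<lambda>x. frac R S x \<one>" by (rule frac_hom_ring)
  show ?thesis using a unfolding a_minus_def
    by (simp add: ring_hom_add[OF frac_hom] FH.hom_a_inv)
qed

lemma loc_set_frac1:
  assumes A: "A \<subseteq> carrier R" and SA: "\<And>c a. c \<in> S \<Longrightarrow> a \<in> A \<Longrightarrow> c \<otimes> a \<in> A"
    and x: "x \<in> carrier R" and xl: "frac R S x \<one> \<in> loc_set R S A"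
  shows "\<exists>t\<in>S. t \<otimes> x \<in> A"
proof -
  obtain a s where a: "a \<in> A" "s \<in> S" and e: "frac R S x \<one> = frac R S a s"
    using xl unfolding loc_set_def by blast
  obtain u where u: "u \<in> S" "u \<otimes> s \<otimes> x = u \<otimes> \<one> \<otimes> a"
    using e frac_eq_iff[of x \<one> a s] x a A one_S by auto
  have "(u \<otimes> s) \<otimes> x = u \<otimes> a" using u a A by auto
  moreover have "u \<otimes> a \<in> A" using SA u a by blast
  ultimately show ?thesis using u a S_mult by metis
qed

lemma zero_loc_set: "\<zero> \<in> A \<Longrightarrow> \<zero>\<^bsub>loc_ring R S\<^esub> \<in> loc_set R S A"
  unfolding loc_set_def using one_S by auto

lemma loc_mat_map: "sg \<in> mat_carrier R n \<Longrightarrow> loc_mat R S n sg = mat_map (\<lambda>x. frac R S x \<one>) sg"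
  unfolding loc_mat_def mat_map_def by (intro ext) (auto simp: mat_carrierD)

end

locale cloc_inv = cloc +
  fixes J :: "'a \<Rightarrow> 'a"
  assumes J_closed: "\<And>x. x \<in> carrier R \<Longrightarrow> J x \<in> carrier R"
    and J_mult: "\<And>x y. x \<in> carrier R \<Longrightarrow> y \<in> carrier R \<Longrightarrow> J (x \<otimes> y) = J y \<otimes> J x"
    and J_S: "\<And>s. s \<in> S \<Longrightarrow> J s = s"
begin

lemma loc_inv_frac: assumes a: "x \<in> carrier R" "s \<in> S"
  shows "loc_inv R S J (frac R S x s) = frac R S (J x) s"
proof -
  have H: "frac R S (J x1) s1 = frac R S (J x) s" if p: "(x1, s1) \<in> frac R S x s" for x1 s1
  proof -
    obtain u where u: "u \<in> S" "u \<otimes> s1 \<otimes> x = u \<otimes> s \<otimes> x1" and pc: "x1 \<in> carrier R" "s1 \<in> S"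
      using mem_frac_D[OF p] by blast
    have e: "J (u \<otimes> s1 \<otimes> x) = J (u \<otimes> s \<otimes> x1)" using u(2) by simp
    have e1: "J (u \<otimes> s1 \<otimes> x) = u \<otimes> (s1 \<otimes> J x)" using u(1) a pc J_closed by (simp add: J_mult J_S S_mult cen_simps)
    have e2: "J (u \<otimes> s \<otimes> x1) = u \<otimes> (s \<otimes> J x1)" using u(1) a pc J_closed by (simp add: J_mult J_S S_mult cen_simps)
    have c: "u \<otimes> s \<otimes> J x1 = u \<otimes> s1 \<otimes> J x"
      using e e1 e2 u(1) a pc J_closed by (simp add: m_assoc)
    have cs: "J x1 \<in> carrier R" "J x \<in> carrier R" using J_closed a pc by auto
    show ?thesis unfolding frac_eq_iff[OF cs(1) pc(2) cs(2) a(2)]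
      by (rule bexI[where x=u]) (fact c, fact u(1))
  qed
  have "(x,s) \<in> frac R S x s" using a frac_self by auto
  then show ?thesis unfolding loc_inv_def
  proof (intro Union_const_img)
    fix p assume "p \<in> frac R S x s"
    moreover obtain x1 s1 where "p = (x1,s1)" by fastforce
    ultimately show "frac R S (J (fst p)) (snd p) = frac R S (J x) s" using H by simp
  qed
qed

lemma loc_inv_closed: "Xa \<in> carrier (loc_ring R S) \<Longrightarrow> loc_inv R S J Xa \<in> carrier (loc_ring R S)"
  by (auto elim!: loc_carrierE simp: loc_inv_frac J_closed)

lemma loc_inv_frac1: "x \<in> carrier R \<Longrightarrow> loc_inv R S J (frac R S x \<one>) = frac R S (J x) \<one>"
  using loc_inv_frac one_S by blast

end


context ring begin

lemma finsum_in_subgroup: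
  assumes A: "additive_subgroup A R" and F: "finite F" and f: "\<And>k. k \<in> F \<Longrightarrow> f k \<in> A"
  shows "finsum R f F \<in> A"
  using F f
proof (induction F rule: finite_induct)
  case empty then show ?case using A by (simp add: additive_subgroup.zero_closed)
next
  case (insert a F)
  have c: "\<And>k. k \<in> insert a F \<Longrightarrow> f k \<in> carrier R"
    using insert.prems additive_subgroup.a_subset[OF A] by blast
  then show ?case using insert A
    by (subst finsum_insert) (auto simp: Pi_def intro!: additive_subgroup.a_closed[OF A])
qed

lemma mat_one_rel:
  assumes J: "\<And>x. x \<in> carrier R \<Longrightarrow> J x \<in> carrier R" and l: "l \<in> carrier R"
    and z: "\<zero> \<in> Lam" "\<zero> \<in> K" "\<zero> \<in> Del"
  shows "mat_one R n \<in> U2n_rel R J l Lam n K Del"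
proof -
  have "mat_one R n \<in> GL R n"
    unfolding GL_def using mat_one_closed mat_one_left[OF mat_one_closed] by blast
  moreover have "form_h R J l n (mat_vec R n (mat_one R n) u) (mat_vec R n (mat_one R n) v) = form_h R J l n u v"
    if "u \<in> vec_carrier R n" "v \<in> vec_carrier R n" for u v
    using that by (intro form_h_cong J l) (auto simp: mat_vec_one)
  moreover have ff: "form_f R J n (mat_vec R n (mat_one R n) u) (mat_vec R n (mat_one R n) u) \<ominus> form_f R J n u u = \<zero>"
    if "u \<in> vec_carrier R n" for u
  proof -
    have "form_f R J n (mat_vec R n (mat_one R n) u) (mat_vec R n (mat_one R n) u) = form_f R J n u u"
      using that by (intro form_f_cong J) (auto simp: mat_vec_one)
    then show ?thesis using that form_f_closed[OF J] by simp
  qed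
  ultimately show ?thesis using z unfolding U2n_rel_def U2n_def by (auto simp: mat_one_def)
qed

end

locale mainloc =
  fixes R :: "'a ring" (structure) and J :: "'a \<Rightarrow> 'a" and l :: 'a
    and Lam I Gam C' m :: "'a set" and n :: nat
  assumes fr: "form_ring R J l Lam"
    and C'c: "C' \<subseteq> ring_center R"
    and noeth: "noetherian_module R (norm_sums R J C')"
    and fi: "form_ideal R J l Lam I Gam"
    and mx: "maximalideal m (R\<lparr>carrier := norm_sums R J C'\<rparr>)"

context mainloc begin

abbreviation "C \<equiv> norm_sums R J C'"
abbreviation "S \<equiv> C - m"

sublocale ring R using fr unfolding form_ring_def by blast

lemma invo: "is_involution R J" using fr unfolding form_ring_def by blast
lemma J_closed: "x \<in> carrier R \<Longrightarrow> J x \<in> carrier R" using invo unfolding is_involution_def by blast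
lemma J_add: "x \<in> carrier R \<Longrightarrow> y \<in> carrier R \<Longrightarrow> J (x \<oplus> y) = J x \<oplus> J y" using invo unfolding is_involution_def by blast
lemma J_mult: "x \<in> carrier R \<Longrightarrow> y \<in> carrier R \<Longrightarrow> J (x \<otimes> y) = J y \<otimes> J x" using invo unfolding is_involution_def by blast
lemma J_J: "x \<in> carrier R \<Longrightarrow> J (J x) = x" using invo unfolding is_involution_def by blast
lemma J_zero: "J \<zero> = \<zero>"
proof -
  have "J \<zero> = J \<zero> \<oplus> J \<zero>" using J_add[of \<zero> \<zero>] by simp
  then show ?thesis using J_closed[of \<zero>] by (metis l_zero r_zero add.r_cancel zero_closed)
qed
lemma J_neg: "x \<in> carrier R \<Longrightarrow> J (\<ominus> x) = \<ominus> J x"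
proof -
  assume x: "x \<in> carrier R"
  have "J x \<oplus> J (\<ominus> x) = \<zero>" using J_add[of x "\<ominus> x"] x by (simp add: J_zero r_neg)
  then show ?thesis using x J_closed by (metis a_inv_closed add.inv_equality a_comm)
qed

lemma l_car: "l \<in> carrier R" using fr unfolding form_ring_def ring_center_def by blast
lemma Lam_sub: "additive_subgroup Lam R" using fr unfolding form_ring_def form_parameter_def by blast
lemma I_ideal: "ideal I R" using fi unfolding form_ideal_def by blast
lemma Gam_sub: "additive_subgroup Gam R" using fi unfolding form_ideal_def by blast
lemma Gam_I: "Gam \<subseteq> I" and Gam_Lam: "Gam \<subseteq> Lam" using fi unfolding form_ideal_def by blast+
lemma Gam_conj: "a \<in> carrier R \<Longrightarrow> g \<in> Gam \<Longrightarrow> a \<otimes> g \<otimes> J a \<in> Gam" using fi unfolding form_ideal_def by blast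
lemma Gam_car: "g \<in> Gam \<Longrightarrow> g \<in> carrier R" using additive_subgroup.a_subset[OF Gam_sub] by blast
lemma I_car: "x \<in> I \<Longrightarrow> x \<in> carrier R" using ideal.axioms(1)[OF I_ideal] additive_subgroup.a_subset by blast
lemma Lam_car: "x \<in> Lam \<Longrightarrow> x \<in> carrier R" using additive_subgroup.a_subset[OF Lam_sub] by blast

lemma J_central: assumes d: "d \<in> carrier R" "\<And>r. r \<in> carrier R \<Longrightarrow> d \<otimes> r = r \<otimes> d"
  and r: "r \<in> carrier R" shows "J d \<otimes> r = r \<otimes> J d"
proof -
  have "J d \<otimes> r = J d \<otimes> J (J r)" using r J_J by simp
  also have "\<dots> = J (J r \<otimes> d)" using d r J_closed by (simp add: J_mult)
  also have "\<dots> = J (d \<otimes> J r)" using d(2)[of "J r"] r J_closed by simp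
  also have "\<dots> = r \<otimes> J d" using d(1) r J_closed by (simp add: J_mult J_J)
  finally show ?thesis .
qed

lemma C_props: "c \<in> C \<Longrightarrow> c \<in> carrier R \<and> (\<forall>r\<in>carrier R. c \<otimes> r = r \<otimes> c) \<and> J c = c \<and> (\<forall>g\<in>Gam. c \<otimes> g \<in> Gam)"
proof (induction rule: norm_sums.induct)
  case zero then show ?case using additive_subgroup.zero_closed[OF Gam_sub] by (auto simp: J_zero Gam_car)
next
  case (pos d x)
  have d: "d \<in> carrier R" "\<And>r. r \<in> carrier R \<Longrightarrow> d \<otimes> r = r \<otimes> d" using pos.hyps C'c unfolding ring_center_def by auto
  have Jd: "J d \<in> carrier R" "\<And>r. r \<in> carrier R \<Longrightarrow> J d \<otimes> r = r \<otimes> J d" using J_central[OF d] J_closed d by auto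
  let ?y = "d \<otimes> J d"
  have y: "?y \<in> carrier R" using d(1) Jd(1) by simp
  have yc: "?y \<otimes> r = r \<otimes> ?y" if r: "r \<in> carrier R" for r
  proof -
    have "?y \<otimes> r = d \<otimes> (J d \<otimes> r)" using r d(1) Jd(1) by (simp add: m_assoc)
    also have "\<dots> = d \<otimes> (r \<otimes> J d)" using Jd(2)[OF r] by simp
    also have "\<dots> = (d \<otimes> r) \<otimes> J d" using r d(1) Jd(1) by (simp add: m_assoc)
    also have "\<dots> = (r \<otimes> d) \<otimes> J d" using d(2)[OF r] by simp
    also have "\<dots> = r \<otimes> ?y" using r d(1) Jd(1) by (simp add: m_assoc)
    finally show ?thesis .
  qed
  have Jy: "J ?y = ?y" using d(1) Jd(1) by (simp add: J_mult J_J)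
  have yg: "?y \<otimes> g \<in> Gam" if "g \<in> Gam" for g
  proof -
    have gc: "g \<in> carrier R" using that Gam_car by blast
    have "?y \<otimes> g = d \<otimes> (J d \<otimes> g)" using gc d(1) Jd(1) by (simp add: m_assoc)
    also have "\<dots> = d \<otimes> (g \<otimes> J d)" using Jd(2)[OF gc] by simp
    also have "\<dots> = d \<otimes> g \<otimes> J d" using gc d(1) Jd(1) by (simp add: m_assoc)
    finally have "?y \<otimes> g = d \<otimes> g \<otimes> J d" .
    then show ?thesis using Gam_conj[OF d(1) that] by simp
  qed
  have yy: "?y \<in> carrier R" using y by simp
  have Jyy: "J ?y = ?y" using y Jy by (simp add: J_neg)
  have x: "x \<in> carrier R" "\<And>r. r \<in> carrier R \<Longrightarrow> x \<otimes> r = r \<otimes> x" "J x = x" "\<And>g. g \<in> Gam \<Longrightarrow> x \<otimes> g \<in> Gam"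
    using pos.IH by auto
  have "(?y \<oplus> x) \<otimes> r = r \<otimes> (?y \<oplus> x)" if r: "r \<in> carrier R" for r
    using r yy x(1) yc[OF r] x(2)[OF r] by (simp add: l_distr r_distr)
  moreover have "J (?y \<oplus> x) = ?y \<oplus> x" using yy x(1,3) Jyy by (simp add: J_add)
  moreover have "(?y \<oplus> x) \<otimes> g \<in> Gam" if g: "g \<in> Gam" for g
  proof -
    have "(?y \<oplus> x) \<otimes> g = ?y \<otimes> g \<oplus> x \<otimes> g" using g Gam_car yy x(1) by (simp add: l_distr)
    then show ?thesis using yg[OF g] x(4)[OF g] additive_subgroup.a_closed[OF Gam_sub] by simp
  qed
  ultimately show ?case using yy x(1) by auto
next
  case (neg d x)
  have d: "d \<in> carrier R" "\<And>r. r \<in> carrier R \<Longrightarrow> d \<otimes> r = r \<otimes> d" using neg.hyps C'c unfolding ring_center_def by auto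
  have Jd: "J d \<in> carrier R" "\<And>r. r \<in> carrier R \<Longrightarrow> J d \<otimes> r = r \<otimes> J d" using J_central[OF d] J_closed d by auto
  let ?y = "d \<otimes> J d"
  have y: "?y \<in> carrier R" using d(1) Jd(1) by simp
  have yc: "?y \<otimes> r = r \<otimes> ?y" if r: "r \<in> carrier R" for r
  proof -
    have "?y \<otimes> r = d \<otimes> (J d \<otimes> r)" using r d(1) Jd(1) by (simp add: m_assoc)
    also have "\<dots> = d \<otimes> (r \<otimes> J d)" using Jd(2)[OF r] by simp
    also have "\<dots> = (d \<otimes> r) \<otimes> J d" using r d(1) Jd(1) by (simp add: m_assoc)
    also have "\<dots> = (r \<otimes> d) \<otimes> J d" using d(2)[OF r] by simp
    also have "\<dots> = r \<otimes> ?y" using r d(1) Jd(1) by (simp add: m_assoc)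
    finally show ?thesis .
  qed
  have Jy: "J ?y = ?y" using d(1) Jd(1) by (simp add: J_mult J_J)
  have yg: "?y \<otimes> g \<in> Gam" if "g \<in> Gam" for g
  proof -
    have gc: "g \<in> carrier R" using that Gam_car by blast
    have "?y \<otimes> g = d \<otimes> (J d \<otimes> g)" using gc d(1) Jd(1) by (simp add: m_assoc)
    also have "\<dots> = d \<otimes> (g \<otimes> J d)" using Jd(2)[OF gc] by simp
    also have "\<dots> = d \<otimes> g \<otimes> J d" using gc d(1) Jd(1) by (simp add: m_assoc)
    finally have "?y \<otimes> g = d \<otimes> g \<otimes> J d" .
    then show ?thesis using Gam_conj[OF d(1) that] by simp
  qed
  have nyc: "\<ominus> ?y \<otimes> r = r \<otimes> \<ominus> ?y" if "r \<in> carrier R" for r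
    using that y yc by (simp add: l_minus r_minus)
  have nyg: "\<ominus> ?y \<otimes> g \<in> Gam" if "g \<in> Gam" for g
    using that y yg Gam_car by (simp add: l_minus additive_subgroup.a_inv_closed[OF Gam_sub])
  have yy: "(\<ominus> ?y) \<in> carrier R" using y by simp
  have Jyy: "J (\<ominus> ?y) = (\<ominus> ?y)" using y Jy by (simp add: J_neg)
  have x: "x \<in> carrier R" "\<And>r. r \<in> carrier R \<Longrightarrow> x \<otimes> r = r \<otimes> x" "J x = x" "\<And>g. g \<in> Gam \<Longrightarrow> x \<otimes> g \<in> Gam"
    using neg.IH by auto
  have "((\<ominus> ?y) \<oplus> x) \<otimes> r = r \<otimes> ((\<ominus> ?y) \<oplus> x)" if r: "r \<in> carrier R" for r
    using r yy x(1) nyc[OF r] x(2)[OF r] by (simp add: l_distr r_distr)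
  moreover have "J ((\<ominus> ?y) \<oplus> x) = (\<ominus> ?y) \<oplus> x" using yy x(1,3) Jyy by (simp add: J_add)
  moreover have "((\<ominus> ?y) \<oplus> x) \<otimes> g \<in> Gam" if g: "g \<in> Gam" for g
  proof -
    have "((\<ominus> ?y) \<oplus> x) \<otimes> g = (\<ominus> ?y) \<otimes> g \<oplus> x \<otimes> g" using g Gam_car yy x(1) by (simp add: l_distr)
    then show ?thesis using nyg[OF g] x(4)[OF g] additive_subgroup.a_closed[OF Gam_sub] by simp
  qed
  ultimately show ?case using yy x(1) by auto
qed

lemma C_car: "c \<in> C \<Longrightarrow> c \<in> carrier R" using C_props by blast
lemma C_cen: "c \<in> C \<Longrightarrow> r \<in> carrier R \<Longrightarrow> c \<otimes> r = r \<otimes> c" using C_props by blast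
lemma C_J: "c \<in> C \<Longrightarrow> J c = c" using C_props by blast
lemma C_Gam: "c \<in> C \<Longrightarrow> g \<in> Gam \<Longrightarrow> c \<otimes> g \<in> Gam" using C_props by blast

abbreviation "R' \<equiv> R\<lparr>carrier := C\<rparr>"

lemma R'_ring: "ring R'"
  using mx unfolding maximalideal_def ideal_def by blast

lemma R'_cring: "cring R'"
proof -
  interpret R': ring R' by (rule R'_ring)
  have "comm_monoid R'" by (rule R'.monoid_comm_monoidI) (auto simp: C_cen C_car)
  then show ?thesis by (intro cring.intro R'_ring)
qed

lemma m_prime: "primeideal m R'"
  using cring.maximalideal_prime[OF R'_cring mx] .

lemma C_mult: "a \<in> C \<Longrightarrow> b \<in> C \<Longrightarrow> a \<otimes> b \<in> C"
  using ring.ring_simprules(5)[OF R'_ring] by simp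

lemma one_C: "\<one> \<in> C" using ring.ring_simprules(6)[OF R'_ring] by simp

lemma oneS: "\<one> \<in> S"
proof -
  interpret P: primeideal m R' by (rule m_prime)
  have "\<one> \<notin> m" using P.one_imp_carrier P.I_notcarr by auto
  then show ?thesis using one_C by simp
qed

lemma SmultS: "s \<in> S \<Longrightarrow> t \<in> S \<Longrightarrow> s \<otimes> t \<in> S"
proof -
  assume s: "s \<in> S" and t: "t \<in> S"
  interpret P: primeideal m R' by (rule m_prime)
  have "s \<otimes> t \<notin> m" using P.I_prime[of s t] s t by auto
  then show ?thesis using C_mult s t by auto
qed

sublocale cloc R S
proof unfold_locales
  show "S \<subseteq> carrier R" using C_car by blast
  show "\<And>s x. s \<in> S \<Longrightarrow> x \<in> carrier R \<Longrightarrow> s \<otimes> x = x \<otimes> s" using C_cen by blast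
  show "\<one> \<in> S" by (rule oneS)
  show "\<And>s t. s \<in> S \<Longrightarrow> t \<in> S \<Longrightarrow> s \<otimes> t \<in> S" by (rule SmultS)
qed

sublocale cloc_inv R S J
proof unfold_locales
  show "\<And>x. x \<in> carrier R \<Longrightarrow> J x \<in> carrier R" by (rule J_closed)
  show "\<And>x y. x \<in> carrier R \<Longrightarrow> y \<in> carrier R \<Longrightarrow> J (x \<otimes> y) = J y \<otimes> J x" by (rule J_mult)
  show "\<And>s. s \<in> S \<Longrightarrow> J s = s" using C_J by blast
qed

end


context mainloc begin

definition sat :: "'a set \<Rightarrow> 'a set" where
  "sat A = {x \<in> carrier R. \<exists>t\<in>S. t \<otimes> x \<in> A}"

lemma common_t:
  assumes F: "finite F" and ex: "\<And>f. f \<in> F \<Longrightarrow> \<exists>t\<in>S. P t f"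
    and up: "\<And>t f c. P t f \<Longrightarrow> t \<in> S \<Longrightarrow> c \<in> S \<Longrightarrow> P (c \<otimes> t) f"
  shows "\<exists>t\<in>S. \<forall>f\<in>F. P t f"
  using F ex
proof (induction F rule: finite_induct)
  case empty then show ?case using oneS by blast
next
  case (insert a F)
  obtain t0 where t0: "t0 \<in> S" "\<forall>f\<in>F. P t0 f" using insert by blast
  obtain t1 where t1: "t1 \<in> S" "P t1 a" using insert by blast
  have "P (t1 \<otimes> t0) f" if "f \<in> F" for f using up t0 t1 that by blast
  moreover have "P (t1 \<otimes> t0) a"
  proof -
    have "P (t0 \<otimes> t1) a" using up t0 t1 by blast
    then show ?thesis using S_cen[of t0 t1] t0 t1 by simp
  qed
  ultimately show ?case using t0 t1 SmultS by blast
qed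

lemma sat_props:
  assumes A: "additive_subgroup A R" and SA: "\<And>c a. c \<in> C \<Longrightarrow> a \<in> A \<Longrightarrow> c \<otimes> a \<in> A"
  shows "additive_subgroup (sat A) R" "\<And>c x. c \<in> C \<Longrightarrow> x \<in> sat A \<Longrightarrow> c \<otimes> x \<in> sat A"
    "A \<subseteq> sat A"
proof -
  have Ac: "\<And>a. a \<in> A \<Longrightarrow> a \<in> carrier R" using additive_subgroup.a_subset[OF A] by blast
  show "additive_subgroup (sat A) R"
  proof (rule additive_subgroupI')
    show "sat A \<subseteq> carrier R" unfolding sat_def by auto
    show "\<zero> \<in> sat A" unfolding sat_def using oneS additive_subgroup.zero_closed[OF A] by force
  next
    fix x y assume "x \<in> sat A" "y \<in> sat A"
    then obtain t1 t2 where x: "x \<in> carrier R" "t1 \<in> S" "t1 \<otimes> x \<in> A" and y: "y \<in> carrier R" "t2 \<in> S" "t2 \<otimes> y \<in> A"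
      unfolding sat_def by blast
    have "(t1 \<otimes> t2) \<otimes> (x \<oplus> y) = t2 \<otimes> (t1 \<otimes> x) \<oplus> t1 \<otimes> (t2 \<otimes> y)"
      using x y by (simp add: r_distr cen_simps)
    also have "\<dots> \<in> A" using x y SA by (intro additive_subgroup.a_closed[OF A]) auto
    finally show "x \<oplus> y \<in> sat A" unfolding sat_def using x y SmultS by blast
  next
    fix x assume "x \<in> sat A"
    then obtain t where x: "x \<in> carrier R" "t \<in> S" "t \<otimes> x \<in> A" unfolding sat_def by blast
    have "t \<otimes> (\<ominus> x) = \<ominus> (t \<otimes> x)" using x by (simp add: r_minus)
    also have "\<dots> \<in> A" using x additive_subgroup.a_inv_closed[OF A] by blast
    finally show "\<ominus> x \<in> sat A" unfolding sat_def using x by blast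
  qed
  show "\<And>c x. c \<in> C \<Longrightarrow> x \<in> sat A \<Longrightarrow> c \<otimes> x \<in> sat A"
  proof -
    fix c x assume c: "c \<in> C" and "x \<in> sat A"
    then obtain t where x: "x \<in> carrier R" "t \<in> S" "t \<otimes> x \<in> A" unfolding sat_def by blast
    have cc: "c \<in> carrier R" using c C_car by blast
    have "t \<otimes> (c \<otimes> x) = (t \<otimes> c) \<otimes> x" using x cc by (simp add: m_assoc)
    also have "\<dots> = (c \<otimes> t) \<otimes> x" using C_cen[OF c, of t] x by simp
    also have "\<dots> = c \<otimes> (t \<otimes> x)" using x cc by (simp add: m_assoc)
    finally have "t \<otimes> (c \<otimes> x) = c \<otimes> (t \<otimes> x)" .
    then have "t \<otimes> (c \<otimes> x) \<in> A" using SA[OF c x(3)] by simp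
    then show "c \<otimes> x \<in> sat A" unfolding sat_def using x cc by blast
  qed
  show "A \<subseteq> sat A" unfolding sat_def using oneS Ac by force
qed

lemma sat_gen:
  assumes A: "additive_subgroup A R" and SA: "\<And>c a. c \<in> C \<Longrightarrow> a \<in> A \<Longrightarrow> c \<otimes> a \<in> A"
  shows "\<exists>s\<in>S. \<forall>r\<in>sat A. s \<otimes> r \<in> A"
proof -
  note sp = sat_props[OF A SA]
  have pre: "additive_subgroup (sat A) R \<and> (\<forall>c\<in>C. \<forall>x\<in>sat A. c \<otimes> x \<in> sat A)" using sp(1) sp(2) by blast
  have ex: "\<exists>F. finite F \<and> F \<subseteq> sat A \<and> sat A = {finsum R (\<lambda>f. a f \<otimes> f) F | a. a \<in> F \<rightarrow> C}"
    using mp[OF spec[OF noeth[unfolded noetherian_module_def], of "sat A"] pre] .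
  from ex obtain F where FF: "finite F \<and> F \<subseteq> sat A \<and> sat A = {finsum R (\<lambda>f. a f \<otimes> f) F | a. a \<in> F \<rightarrow> C}" ..
  have F: "finite F" "F \<subseteq> sat A" using FF by auto
  have Fg: "sat A = {finsum R (\<lambda>f. a f \<otimes> f) F | a. a \<in> F \<rightarrow> C}" using FF by (rule conjunct2[OF conjunct2])
  have Fc: "f \<in> carrier R" if "f \<in> F" for f using that F(2) unfolding sat_def by blast
  have "\<exists>t\<in>S. \<forall>f\<in>F. t \<otimes> f \<in> A \<and> f \<in> carrier R"
  proof (rule common_t[OF F(1)])
    fix f assume "f \<in> F" then show "\<exists>t\<in>S. t \<otimes> f \<in> A \<and> f \<in> carrier R" using F(2) unfolding sat_def by blast
  next
    fix t f c assume tf: "t \<otimes> f \<in> A \<and> f \<in> carrier R" and t: "t \<in> S" and c: "c \<in> S"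
    have "c \<otimes> t \<otimes> f = c \<otimes> (t \<otimes> f)" using tf t c by (simp add: m_assoc)
    then show "c \<otimes> t \<otimes> f \<in> A \<and> f \<in> carrier R" using SA c tf by auto
  qed
  then obtain s where s: "s \<in> S" "\<And>f. f \<in> F \<Longrightarrow> s \<otimes> f \<in> A" by blast
  have "s \<otimes> r \<in> A" if r: "r \<in> sat A" for r
  proof -
    obtain a where a: "a \<in> F \<rightarrow> C" and re: "r = finsum R (\<lambda>f. a f \<otimes> f) F" using r Fg by blast
    have ac: "a f \<in> carrier R" if "f \<in> F" for f using a that C_car by blast
    have "s \<otimes> r = finsum R (\<lambda>f. s \<otimes> (a f \<otimes> f)) F"
      unfolding re using s F(1) ac Fc by (subst finsum_rdistr) (auto simp: Pi_def)
    also have "\<dots> = finsum R (\<lambda>f. a f \<otimes> (s \<otimes> f)) F"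
      using s ac Fc by (intro finsum_cong') (auto simp: Pi_def cen_lcomm)
    also have "\<dots> \<in> A"
      using s a F(1) SA by (intro finsum_in_subgroup[OF A]) auto
    finally show ?thesis .
  qed
  then show ?thesis using s by blast
qed

lemma I_sub: "additive_subgroup I R" using I_ideal unfolding ideal_def by blast
lemma I_C: "c \<in> C \<Longrightarrow> a \<in> I \<Longrightarrow> c \<otimes> a \<in> I" using ideal.I_l_closed[OF I_ideal] C_car by blast

definition s1 where "s1 = (SOME s. s \<in> S \<and> (\<forall>r\<in>sat I. s \<otimes> r \<in> I))"
definition s2 where "s2 = (SOME s. s \<in> S \<and> (\<forall>r\<in>sat Gam. s \<otimes> r \<in> Gam))"

lemma s1_aux: "s1 \<in> S \<and> (\<forall>r\<in>sat I. s1 \<otimes> r \<in> I)"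
  unfolding s1_def by (rule someI_ex) (use sat_gen[OF I_sub I_C] in blast)
lemma s2_aux: "s2 \<in> S \<and> (\<forall>r\<in>sat Gam. s2 \<otimes> r \<in> Gam)"
  unfolding s2_def by (rule someI_ex) (use sat_gen[OF Gam_sub C_Gam] in blast)
lemma s1: "s1 \<in> S" "\<And>r. r \<in> sat I \<Longrightarrow> s1 \<otimes> r \<in> I" using s1_aux by auto
lemma s2: "s2 \<in> S" "\<And>r. r \<in> sat Gam \<Longrightarrow> s2 \<otimes> r \<in> Gam" using s2_aux by auto

definition s0 where "s0 = s1 \<otimes> s2"
lemma s0S: "s0 \<in> S" unfolding s0_def using s1 s2 SmultS by blast

lemma P1: assumes r: "r \<in> carrier R" and t: "t \<in> S" and tx: "t \<otimes> (s0 \<otimes> r) \<in> I"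
  shows "s0 \<otimes> r \<in> I"
proof -
  have "(t \<otimes> s0) \<otimes> r \<in> I" using tx t s0S r by (simp add: m_assoc)
  then have "r \<in> sat I" unfolding sat_def using r t s0S SmultS by blast
  then have "s1 \<otimes> r \<in> I" by (rule s1(2))
  moreover have "s0 \<otimes> r = s2 \<otimes> (s1 \<otimes> r)" unfolding s0_def using s1(1) s2(1) r by (simp add: cen_simps)
  ultimately show ?thesis using s2(1) I_C by simp
qed

lemma P2: assumes r: "r \<in> carrier R" and t: "t \<in> S" and tx: "t \<otimes> (s0 \<otimes> r) \<in> Gam"
  shows "s0 \<otimes> r \<in> Gam"
proof -
  have "(t \<otimes> s0) \<otimes> r \<in> Gam" using tx t s0S r by (simp add: m_assoc)
  then have "r \<in> sat Gam" unfolding sat_def using r t s0S SmultS by blast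
  then have "s2 \<otimes> r \<in> Gam" by (rule s2(2))
  moreover have "s0 \<otimes> r = s1 \<otimes> (s2 \<otimes> r)" unfolding s0_def using s1(1) s2(1) r by (simp add: cen_simps)
  ultimately show ?thesis using s1(1) C_Gam by simp
qed

end


context mainloc begin

abbreviation "G \<equiv> U2n_group R J l Lam n"
abbreviation "H \<equiv> U2n_rel R J l Lam n I Gam"
abbreviation "K0 \<equiv> {s0 \<otimes> r | r. r \<in> carrier R}"
abbreviation "D0 \<equiv> {s0 \<otimes> a | a. a \<in> Lam}"
abbreviation "KK \<equiv> U2n_rel R J l Lam n K0 D0"
abbreviation "NH \<equiv> U2n_rel R J l Lam n (sat I) (sat Gam)"
abbreviation "L \<equiv> loc_ring R S"
abbreviation "fr \<equiv> \<lambda>x. frac R S x \<one>"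
abbreviation "J' \<equiv> loc_inv R S J"
abbreviation "l' \<equiv> frac R S l \<one>"
abbreviation "G' \<equiv> U2n_group L J' l' (loc_set R S Lam) n"
abbreviation "H' \<equiv> U2n_rel L J' l' (loc_set R S Lam) n (loc_set R S I) (loc_set R S Gam)"

lemma U: "ugrp R J l Lam"
  unfolding ugrp_def ugrp_axioms_def using ring_axioms J_closed l_car Lam_sub by blast

lemma G_group: "group G" using ugrp.U2n_group[OF U] .
lemma G_simps': "carrier G = U2n R J l Lam n" "monoid.mult G = mat_mult R n" "\<one>\<^bsub>G\<^esub> = mat_one R n"
  using ugrp.G_simps[OF U] by auto

lemma s0c: "s0 \<in> carrier R" using s0S by simp

lemma H_sub: "subgroup H G"
  using ugrp.rel_subgroup[OF U I_sub _ _ Gam_sub] ideal.I_l_closed[OF I_ideal] ideal.I_r_closed[OF I_ideal] by blast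

lemma K0_sub: "additive_subgroup K0 R"
proof (rule additive_subgroupI')
  show "K0 \<subseteq> carrier R" using s0c by auto
  show "\<zero> \<in> K0" using s0c by (auto intro!: exI[of _ \<zero>])
  fix x y assume "x \<in> K0" "y \<in> K0"
  then obtain a b where "x = s0 \<otimes> a" "y = s0 \<otimes> b" "a \<in> carrier R" "b \<in> carrier R" by blast
  then show "x \<oplus> y \<in> K0" using s0c by (auto simp: r_distr intro!: exI[of _ "a \<oplus> b"])
next
  fix x assume "x \<in> K0"
  then obtain a where "x = s0 \<otimes> a" "a \<in> carrier R" by blast
  then show "\<ominus> x \<in> K0" using s0c by (auto simp: r_minus intro!: exI[of _ "\<ominus> a"])
qed

lemma D0_sub: "additive_subgroup D0 R"
proof (rule additive_subgroupI')
  show "D0 \<subseteq> carrier R" using s0c Lam_car by auto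
  show "\<zero> \<in> D0" using s0c additive_subgroup.zero_closed[OF Lam_sub] by (auto intro!: exI[of _ \<zero>])
  fix x y assume "x \<in> D0" "y \<in> D0"
  then obtain a b where "x = s0 \<otimes> a" "y = s0 \<otimes> b" "a \<in> Lam" "b \<in> Lam" by blast
  then show "x \<oplus> y \<in> D0" using s0c Lam_car additive_subgroup.a_closed[OF Lam_sub]
    by (auto simp: r_distr intro!: exI[of _ "a \<oplus> b"])
next
  fix x assume "x \<in> D0"
  then obtain a where "x = s0 \<otimes> a" "a \<in> Lam" by blast
  then show "\<ominus> x \<in> D0" using s0c Lam_car additive_subgroup.a_inv_closed[OF Lam_sub]
    by (auto simp: r_minus intro!: exI[of _ "\<ominus> a"])
qed

lemma KK_sub: "subgroup KK G"
proof (rule ugrp.rel_subgroup[OF U K0_sub _ _ D0_sub])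
  fix x a assume "x \<in> K0" "a \<in> carrier R"
  then obtain r where r: "x = s0 \<otimes> r" "r \<in> carrier R" by blast
  have "a \<otimes> x = s0 \<otimes> (a \<otimes> r)" unfolding r(1) by (rule cen_lcomm[OF s0S \<open>a \<in> carrier R\<close> r(2)])
  then show "a \<otimes> x \<in> K0" using r \<open>a \<in> carrier R\<close> by auto
  have "x \<otimes> a = s0 \<otimes> (r \<otimes> a)" using r \<open>a \<in> carrier R\<close> s0c by (simp add: m_assoc)
  then show "x \<otimes> a \<in> K0" using r \<open>a \<in> carrier R\<close> by auto
qed

lemma satI_sub: "additive_subgroup (sat I) R" using sat_props(1)[OF I_sub I_C] .
lemma satG_sub: "additive_subgroup (sat Gam) R" using sat_props(1)[OF Gam_sub C_Gam] .

lemma NH_sub: "subgroup NH G"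
proof (rule ugrp.rel_subgroup[OF U satI_sub _ _ satG_sub])
  fix x a assume "x \<in> sat I" and a: "a \<in> carrier R"
  then obtain t where x: "x \<in> carrier R" "t \<in> S" "t \<otimes> x \<in> I" unfolding sat_def by blast
  have "t \<otimes> (a \<otimes> x) = a \<otimes> (t \<otimes> x)" by (rule cen_lcomm[OF x(2) a x(1), symmetric])
  then have "t \<otimes> (a \<otimes> x) \<in> I" using ideal.I_l_closed[OF I_ideal x(3) a] by simp
  then show "a \<otimes> x \<in> sat I" unfolding sat_def using x a by blast
  have "t \<otimes> (x \<otimes> a) = (t \<otimes> x) \<otimes> a" using x a by (simp add: m_assoc)
  then have "t \<otimes> (x \<otimes> a) \<in> I" using ideal.I_r_closed[OF I_ideal x(3) a] by simp
  then show "x \<otimes> a \<in> sat I" unfolding sat_def using x a by blast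
qed

lemma H_NH: "H \<subseteq> NH"
  using sat_props(3)[OF I_sub I_C] sat_props(3)[OF Gam_sub C_Gam] unfolding U2n_rel_def by blast

lemma L_ring: "ring L" by (rule loc_ring)

lemma one'_H': "mat_one L n \<in> H'"
proof (rule ring.mat_one_rel[OF L_ring])
  show "\<And>x. x \<in> carrier L \<Longrightarrow> J' x \<in> carrier L" by (rule loc_inv_closed)
  show "l' \<in> carrier L" using l_car oneS by simp
  show "\<zero>\<^bsub>L\<^esub> \<in> loc_set R S Lam" by (rule zero_loc_set[OF additive_subgroup.zero_closed[OF Lam_sub]])
  show "\<zero>\<^bsub>L\<^esub> \<in> loc_set R S I" by (rule zero_loc_set[OF additive_subgroup.zero_closed[OF I_sub]])
  show "\<zero>\<^bsub>L\<^esub> \<in> loc_set R S Gam" by (rule zero_loc_set[OF additive_subgroup.zero_closed[OF Gam_sub]])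
qed

end


context mainloc begin

lemma I_S: "c \<in> S \<Longrightarrow> a \<in> I \<Longrightarrow> c \<otimes> a \<in> I" using I_C by blast
lemma Gam_S: "c \<in> S \<Longrightarrow> a \<in> Gam \<Longrightarrow> c \<otimes> a \<in> Gam" using C_Gam by blast
lemma I_subc: "I \<subseteq> carrier R" using I_car by blast
lemma Gam_subc: "Gam \<subseteq> carrier R" using Gam_car by blast

lemma L_U2n_mat: "g \<in> U2n L J' l' (loc_set R S Lam) n \<Longrightarrow> g \<in> mat_carrier L n"
  by (simp add: U2n_def GL_def)

lemma inj_main:
  assumes sg: "sg \<in> KK" and tg: "tg \<in> KK"
    and eq: "phi_map R J l Lam n I Gam S (psi_map R J l Lam n I Gam sg) = phi_map R J l Lam n I Gam S (psi_map R J l Lam n I Gam tg)"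
  shows "psi_map R J l Lam n I Gam sg = psi_map R J l Lam n I Gam tg"
proof -
  interpret FH: ring_hom_ring R L fr by (rule frac_hom_ring)
  interpret GG: group G by (rule G_group)
  have KKG: "KK \<subseteq> carrier G" using subgroup.subset[OF KK_sub] .
  have sgG: "sg \<in> carrier G" and tgG: "tg \<in> carrier G" using sg tg KKG by auto
  have sgm: "sg \<in> mat_carrier R n" and tgm: "tg \<in> mat_carrier R n"
    using sgG tgG G_simps' ugrp.U2n_mat[OF U] by auto
  have Fsg: "loc_mat R S n sg = mat_map fr sg" using loc_mat_map[OF sgm] .
  have "loc_mat R S n sg \<in> H' #>\<^bsub>G'\<^esub> loc_mat R S n sg"
  proof -
    have "mat_mult L n (mat_one L n) (loc_mat R S n sg) = loc_mat R S n sg"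
      using Fsg FH.mat_map_carrier[OF sgm] ring.mat_one_left[OF L_ring] by simp
    then show ?thesis using one'_H' unfolding r_coset_def U2n_group_def by force
  qed
  moreover have "sg \<in> H #>\<^bsub>G\<^esub> sg" using GG.rcos_self[OF sgG H_sub] .
  ultimately have "loc_mat R S n sg \<in> phi_map R J l Lam n I Gam S (psi_map R J l Lam n I Gam sg)"
    unfolding phi_map_def psi_map_def by blast
  then have "loc_mat R S n sg \<in> phi_map R J l Lam n I Gam S (psi_map R J l Lam n I Gam tg)"
    using eq by simp
  then obtain rg where rg: "rg \<in> H #>\<^bsub>G\<^esub> tg" and inr: "loc_mat R S n sg \<in> H' #>\<^bsub>G'\<^esub> loc_mat R S n rg"
    unfolding phi_map_def psi_map_def by blast
  obtain h where h: "h \<in> H" and rgh: "rg = h \<otimes>\<^bsub>G\<^esub> tg" using rg unfolding r_coset_def by blast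
  obtain g where g: "g \<in> H'" and ge: "loc_mat R S n sg = mat_mult L n g (loc_mat R S n rg)"
    using inr unfolding r_coset_def U2n_group_def by auto
  have hG: "h \<in> carrier G" using h subgroup.subset[OF H_sub] by blast
  have rgG: "rg \<in> carrier G" using rgh hG tgG by simp
  have rgm: "rg \<in> mat_carrier R n" using rgG G_simps' ugrp.U2n_mat[OF U] by auto
  have gU: "g \<in> U2n L J' l' (loc_set R S Lam) n" using g unfolding U2n_rel_def by blast
  have gm: "g \<in> mat_carrier L n" using L_U2n_mat[OF gU] .
  define pg where "pg = sg \<otimes>\<^bsub>G\<^esub> inv\<^bsub>G\<^esub> rg"
  have irG: "inv\<^bsub>G\<^esub> rg \<in> carrier G" using rgG by simp
  have irm: "inv\<^bsub>G\<^esub> rg \<in> mat_carrier R n" using irG G_simps' ugrp.U2n_mat[OF U] by auto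
  have pgG: "pg \<in> carrier G" unfolding pg_def using sgG irG by simp
  have pgm: "pg \<in> mat_carrier R n" using pgG G_simps' ugrp.U2n_mat[OF U] by auto
  have rr: "mat_mult R n rg (inv\<^bsub>G\<^esub> rg) = mat_one R n"
    using GG.r_inv[OF rgG] G_simps' by simp
  have Fpg: "mat_map fr pg = g"
  proof -
    have "mat_map fr pg = mat_mult L n (mat_map fr sg) (mat_map fr (inv\<^bsub>G\<^esub> rg))"
      unfolding pg_def G_simps' using FH.mat_map_mult[OF sgm irm] by simp
    also have "\<dots> = mat_mult L n (mat_mult L n g (mat_map fr rg)) (mat_map fr (inv\<^bsub>G\<^esub> rg))"
      using ge Fsg loc_mat_map[OF rgm] by simp
    also have "\<dots> = mat_mult L n g (mat_mult L n (mat_map fr rg) (mat_map fr (inv\<^bsub>G\<^esub> rg)))"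
      using ring.mat_assoc[OF L_ring] gm FH.mat_map_carrier rgm irm by blast
    also have "\<dots> = mat_mult L n g (mat_map fr (mat_one R n))"
      using FH.mat_map_mult[OF rgm irm] rr by simp
    also have "\<dots> = g" using FH.mat_map_one ring.mat_one_right[OF L_ring gm] by simp
    finally show ?thesis .
  qed
  have pgNH: "pg \<in> NH"
  proof -
    have pgU: "pg \<in> U2n R J l Lam n" using pgG G_simps' by simp
    have "pg i j \<ominus> mat_one R n i j \<in> sat I" if ij: "i \<in> Omega n" "j \<in> Omega n" for i j
    proof -
      have "g i j \<ominus>\<^bsub>L\<^esub> mat_one L n i j \<in> loc_set R S I" using g ij unfolding U2n_rel_def by blast
      moreover have "g i j = fr (pg i j)" using Fpg unfolding mat_map_def by auto
      moreover have "mat_one L n i j = fr (mat_one R n i j)" using FH.mat_map_one unfolding mat_map_def by metis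
      ultimately have "fr (pg i j \<ominus> mat_one R n i j) \<in> loc_set R S I"
        using frac_minus1[OF mat_carrier_all[OF pgm] ugrp.one_entry_closed[OF U]] by simp
      then obtain t where "t \<in> S" "t \<otimes> (pg i j \<ominus> mat_one R n i j) \<in> I"
        using loc_set_frac1[OF I_subc I_S minus_closed[OF mat_carrier_all[OF pgm] ugrp.one_entry_closed[OF U]]] by blast
      then show ?thesis unfolding sat_def using minus_closed[OF mat_carrier_all[OF pgm] ugrp.one_entry_closed[OF U]] by auto
    qed
    moreover have "form_f R J n (mat_vec R n pg u) (mat_vec R n pg u) \<ominus> form_f R J n u u \<in> sat Gam"
      if u: "u \<in> vec_carrier R n" for u
    proof -
      have fu: "fr \<circ> u \<in> vec_carrier L n" using FH.map_vec_carrier[OF u] .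
      define w where "w = mat_vec R n pg u"
      have w: "w \<in> vec_carrier R n" unfolding w_def using mat_vec_vec[OF pgm u] .
      define a where "a = form_f R J n w w"
      define b where "b = form_f R J n u u"
      have ab: "a \<in> carrier R" "b \<in> carrier R" unfolding a_def b_def using ugrp.ff_closed[OF U] w u by auto
      have JJ: "\<And>x. x \<in> carrier R \<Longrightarrow> fr (J x) = J' (fr x)" using loc_inv_frac1 by simp
      have mf: "form_f L J' n (fr \<circ> v) (fr \<circ> v) = fr (form_f R J n v v)" if "v \<in> vec_carrier R n" for v
        using FH.map_form_f[where J=J and J'=J' and n=n and u=v and v=v, OF J_closed JJ that that] by simp
      have mv: "mat_vec L n g (fr \<circ> u) = fr \<circ> w"
        using FH.mat_map_vec[OF pgm u] Fpg unfolding w_def by simp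
      have "form_f L J' n (mat_vec L n g (fr \<circ> u)) (mat_vec L n g (fr \<circ> u)) \<ominus>\<^bsub>L\<^esub> form_f L J' n (fr \<circ> u) (fr \<circ> u)
            \<in> loc_set R S Gam" using g fu unfolding U2n_rel_def by blast
      also have "form_f L J' n (mat_vec L n g (fr \<circ> u)) (mat_vec L n g (fr \<circ> u)) \<ominus>\<^bsub>L\<^esub> form_f L J' n (fr \<circ> u) (fr \<circ> u)
          = fr a \<ominus>\<^bsub>L\<^esub> fr b" unfolding mv a_def b_def using mf w u by simp
      also have "\<dots> = fr (a \<ominus> b)" using frac_minus1[OF ab] .
      finally have "fr (a \<ominus> b) \<in> loc_set R S Gam" .
      then obtain t where "t \<in> S" "t \<otimes> (a \<ominus> b) \<in> Gam"
        using loc_set_frac1[OF Gam_subc Gam_S minus_closed[OF ab]] by blast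
      then show ?thesis unfolding sat_def using minus_closed[OF ab] unfolding a_def b_def w_def by blast
    qed
    ultimately show ?thesis using pgU unfolding U2n_rel_def by blast
  qed
  define th where "th = sg \<otimes>\<^bsub>G\<^esub> inv\<^bsub>G\<^esub> tg"
  have thKK: "th \<in> KK" unfolding th_def using KK_sub sg tg by (simp add: subgroup.m_closed subgroup.m_inv_closed)
  have th_eq: "th = pg \<otimes>\<^bsub>G\<^esub> h"
  proof -
    have "inv\<^bsub>G\<^esub> rg = inv\<^bsub>G\<^esub> tg \<otimes>\<^bsub>G\<^esub> inv\<^bsub>G\<^esub> h" using rgh GG.inv_mult_group hG tgG by simp
    then have "pg \<otimes>\<^bsub>G\<^esub> h = sg \<otimes>\<^bsub>G\<^esub> (inv\<^bsub>G\<^esub> tg \<otimes>\<^bsub>G\<^esub> (inv\<^bsub>G\<^esub> h \<otimes>\<^bsub>G\<^esub> h))"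
      unfolding pg_def using sgG tgG hG by (simp add: GG.m_assoc)
    also have "\<dots> = th" unfolding th_def using sgG tgG hG by simp
    finally show ?thesis by simp
  qed
  have thNH: "th \<in> NH" unfolding th_eq using pgNH h H_NH NH_sub by (auto intro: subgroup.m_closed)
  have thH: "th \<in> H"
  proof -
    have thU: "th \<in> U2n R J l Lam n" using thKK unfolding U2n_rel_def by blast
    have thmc: "th \<in> mat_carrier R n" using thU ugrp.U2n_mat[OF U] by blast
    have "th i j \<ominus> mat_one R n i j \<in> I" if ij: "i \<in> Omega n" "j \<in> Omega n" for i j
    proof -
      obtain r where r: "r \<in> carrier R" "th i j \<ominus> mat_one R n i j = s0 \<otimes> r" using thKK ij unfolding U2n_rel_def by blast
      obtain t where t: "t \<in> S" "t \<otimes> (th i j \<ominus> mat_one R n i j) \<in> I" using thNH ij unfolding U2n_rel_def sat_def by blast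
      show ?thesis using P1[OF r(1) t(1)] t(2) r(2) by simp
    qed
    moreover have "form_f R J n (mat_vec R n th u) (mat_vec R n th u) \<ominus> form_f R J n u u \<in> Gam"
      if u: "u \<in> vec_carrier R n" for u
    proof -
      obtain a where a: "a \<in> Lam" "form_f R J n (mat_vec R n th u) (mat_vec R n th u) \<ominus> form_f R J n u u = s0 \<otimes> a"
        using thKK u unfolding U2n_rel_def by blast
      obtain t where t: "t \<in> S" "t \<otimes> (form_f R J n (mat_vec R n th u) (mat_vec R n th u) \<ominus> form_f R J n u u) \<in> Gam"
        using thNH u unfolding U2n_rel_def sat_def by blast
      show ?thesis using P2[OF Lam_car[OF a(1)] t(1)] t(2) a(2) by simp
    qed
    ultimately show ?thesis using thU unfolding U2n_rel_def by blast
  qed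
  have "sg \<in> H #>\<^bsub>G\<^esub> tg"
    using subgroup.rcos_module_rev[OF H_sub G_group tgG sgG] thH unfolding th_def by blast
  then have "H #>\<^bsub>G\<^esub> tg = H #>\<^bsub>G\<^esub> sg" using GG.repr_independence[OF _ tgG H_sub] by blast
  then show ?thesis unfolding psi_map_def by simp
qed

end


theorem lemma4p2:
  fixes R :: "'a ring" and J :: "'a \<Rightarrow> 'a" and l :: 'a
    and Lam I Gam C' m :: "'a set" and n :: nat
  assumes "n \<ge> 3"
    and "form_ring R J l Lam"
    and "subring C' R" and "C' \<subseteq> ring_center R"
    and "noetherian_module R (norm_sums R J C')"
    and "form_ideal R J l Lam I Gam"
    and "maximalideal m (R\<lparr>carrier := norm_sums R J C'\<rparr>)"
  shows "\<exists>s0 \<in> norm_sums R J C' - m.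
     (\<forall>x \<in> {s0 \<otimes>\<^bsub>R\<^esub> r | r. r \<in> carrier R}. \<forall>t \<in> norm_sums R J C' - m.
        t \<otimes>\<^bsub>R\<^esub> x \<in> I \<longrightarrow> x \<in> I) \<and>
     (\<forall>x \<in> {s0 \<otimes>\<^bsub>R\<^esub> r | r. r \<in> carrier R}. \<forall>t \<in> norm_sums R J C' - m.
        t \<otimes>\<^bsub>R\<^esub> x \<in> Gam \<longrightarrow> x \<in> Gam) \<and>
     inj_on (phi_map R J l Lam n I Gam (norm_sums R J C' - m))
       (psi_map R J l Lam n I Gam `
          U2n_rel R J l Lam n {s0 \<otimes>\<^bsub>R\<^esub> r | r. r \<in> carrier R} {s0 \<otimes>\<^bsub>R\<^esub> a | a. a \<in> Lam})"
proof -
  interpret M: mainloc R J l Lam I Gam C' m n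
    by (rule mainloc.intro) (fact assms)+
  show ?thesis
  proof (rule bexI[of _ "M.s0"], intro conjI)
    show "M.s0 \<in> norm_sums R J C' - m" by (rule M.s0S)
    show "\<forall>x\<in>{M.s0 \<otimes>\<^bsub>R\<^esub> r |r. r \<in> carrier R}. \<forall>t\<in>norm_sums R J C' - m. t \<otimes>\<^bsub>R\<^esub> x \<in> I \<longrightarrow> x \<in> I"
      using M.P1 by blast
    show "\<forall>x\<in>{M.s0 \<otimes>\<^bsub>R\<^esub> r |r. r \<in> carrier R}. \<forall>t\<in>norm_sums R J C' - m. t \<otimes>\<^bsub>R\<^esub> x \<in> Gam \<longrightarrow> x \<in> Gam"
      using M.P2 by blast
    show "inj_on (phi_map R J l Lam n I Gam (norm_sums R J C' - m))
       (psi_map R J l Lam n I Gam `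
          U2n_rel R J l Lam n {M.s0 \<otimes>\<^bsub>R\<^esub> r | r. r \<in> carrier R} {M.s0 \<otimes>\<^bsub>R\<^esub> a | a. a \<in> Lam})"
    proof (rule inj_onI)
      fix x y assume x: "x \<in> psi_map R J l Lam n I Gam `
          U2n_rel R J l Lam n {M.s0 \<otimes>\<^bsub>R\<^esub> r | r. r \<in> carrier R} {M.s0 \<otimes>\<^bsub>R\<^esub> a | a. a \<in> Lam}"
        and y: "y \<in> psi_map R J l Lam n I Gam `
          U2n_rel R J l Lam n {M.s0 \<otimes>\<^bsub>R\<^esub> r | r. r \<in> carrier R} {M.s0 \<otimes>\<^bsub>R\<^esub> a | a. a \<in> Lam}"
        and e: "phi_map R J l Lam n I Gam (norm_sums R J C' - m) x = phi_map R J l Lam n I Gam (norm_sums R J C' - m) y"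
      from x obtain sg where sg: "sg \<in> U2n_rel R J l Lam n {M.s0 \<otimes>\<^bsub>R\<^esub> r | r. r \<in> carrier R} {M.s0 \<otimes>\<^bsub>R\<^esub> a | a. a \<in> Lam}"
        and xs: "x = psi_map R J l Lam n I Gam sg" by blast
      from y obtain tg where tg: "tg \<in> U2n_rel R J l Lam n {M.s0 \<otimes>\<^bsub>R\<^esub> r | r. r \<in> carrier R} {M.s0 \<otimes>\<^bsub>R\<^esub> a | a. a \<in> Lam}"
        and yt: "y = psi_map R J l Lam n I Gam tg" by blast
      show "x = y" unfolding xs yt by (rule M.inj_main[OF sg tg e[unfolded xs yt]])
    qed
  qed
qed


end
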